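(* Let $\mathbb{K}$ be a field with $\mathrm{char}(\mathbb{K})=p>0$, let $\delta\in\mathbb{F}_p\subset\mathbb{K}$, and let $r,s\in\mathbb{Z}_{\geq 0}$ not both zero. If the walled Brauer algebra $\mathcal{B}_{r,s}(\delta)$ is not semisimple, then $\mathcal{B}_{r+1,s+1}(\delta)$ is not semisimple.
   Context: The walled Brauer algebra $\mathcal{B}_{r,s}(\delta)$ is the unital associative $\mathbb{K}$-algebra generated by $\{\sigma_i\mid i=1,\dots,r+s-1,\ i\neq r\}\cup\{u_r\}$ subject to: $\sigma_i^2=1$; $\sigma_i\sigma_j=\sigma_j\sigma_i$ for $|i-j|>1$; $\sigma_i\sigma_j\sigma_i=\sigma_j\sigma_i\sigma_j$ for $|i-j|=1$; $u_r^2=\delta u_r$; $u_r=u_r\sigma_{r-1}u_r=u_r\sigma_{r+1}u_r$; $u_r\sigma_j=\sigma_ju_r$ for $|r-j|>1$; $u_r\sigma_{r-1}\sigma_{r+1}u_r\sigma_{r-1}\sigma_{r+1}=u_r\sigma_{r-1}\sigma_{r+1}u_r=\sigma_{r-1}\sigma_{r+1}u_r\sigma_{r-1}\sigma_{r+1}u_r$. (Equivalently, the diagram algebra of walled Brauer diagrams with $r$ points left and $s$ points right of the wall, closed loops evaluating to $\delta$.) *)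

theory Defs
  imports Main
begin

text \<open>Points of a diagram on n strands: (False, i) is the i-th top point,
  (True, i) the i-th bottom point, for i < n (0-indexed).  A diagram is a
  fixed-point-free involution of these points (a perfect matching), extended by
  the identity outside, so that the set of diagrams is finite.\<close>

type_synonym pt = "bool \<times> nat"
type_synonym diagram = "pt \<Rightarrow> pt"

definition pts :: "nat \<Rightarrow> pt set" where
  "pts n = UNIV \<times> {..<n}"

definition brauer_diagram :: "nat \<Rightarrow> diagram \<Rightarrow> bool" where
  "brauer_diagram n d \<longleftrightarrow>
     (\<forall>x\<in>pts n. d x \<in> pts n \<and> d x \<noteq> x \<and> d (d x) = x) \<and>
     (\<forall>x. x \<notin> pts n \<longrightarrow> d x = x)"

definition left_of_wall :: "nat \<Rightarrow> pt \<Rightarrow> bool" where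
  "left_of_wall r x \<longleftrightarrow> snd x < r"

definition walled_diagram :: "nat \<Rightarrow> nat \<Rightarrow> diagram \<Rightarrow> bool" where
  "walled_diagram r s d \<longleftrightarrow> brauer_diagram (r + s) d \<and>
     (\<forall>x\<in>pts (r + s).
        (fst x \<noteq> fst (d x) \<longrightarrow> (left_of_wall r x \<longleftrightarrow> left_of_wall r (d x))) \<and>
        (fst x = fst (d x) \<longrightarrow> (left_of_wall r x \<longleftrightarrow> \<not> left_of_wall r (d x))))"

definition WB :: "nat \<Rightarrow> nat \<Rightarrow> diagram set" where
  "WB r s = {d. walled_diagram r s d}"

text \<open>To compose d1 * d2 (d1 on top of d2) we place three rows of points,
  levels 0, 1, 2: d1 connects level 0 (its top) to level 1 (its bottom), d2
  connects level 1 (its top) to level 2 (its bottom).\<close>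

definition lift_top :: "pt \<Rightarrow> nat \<times> nat" where
  "lift_top x = (if fst x then 1 else 0, snd x)"

definition lift_bot :: "pt \<Rightarrow> nat \<times> nat" where
  "lift_bot x = (if fst x then 2 else 1, snd x)"

definition stack_edges :: "nat \<Rightarrow> diagram \<Rightarrow> diagram \<Rightarrow> ((nat \<times> nat) \<times> (nat \<times> nat)) set" where
  "stack_edges n d1 d2 =
     {(lift_top x, lift_top (d1 x)) | x. x \<in> pts n} \<union>
     {(lift_bot x, lift_bot (d2 x)) | x. x \<in> pts n}"

definition stack_conn :: "nat \<Rightarrow> diagram \<Rightarrow> diagram \<Rightarrow> ((nat \<times> nat) \<times> (nat \<times> nat)) set" where
  "stack_conn n d1 d2 = (stack_edges n d1 d2)\<^sup>*"

definition outer :: "pt \<Rightarrow> nat \<times> nat" where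
  "outer x = (if fst x then 2 else 0, snd x)"

definition compose :: "nat \<Rightarrow> diagram \<Rightarrow> diagram \<Rightarrow> diagram" where
  "compose n d1 d2 = (\<lambda>x. if x \<in> pts n
      then (THE y. y \<in> pts n \<and> y \<noteq> x \<and> (outer x, outer y) \<in> stack_conn n d1 d2)
      else x)"

definition loops :: "nat \<Rightarrow> diagram \<Rightarrow> diagram \<Rightarrow> nat" where
  "loops n d1 d2 = card {stack_conn n d1 d2 `` {(1, i)} | i.
      i < n \<and> stack_conn n d1 d2 `` {(1, i)} \<subseteq> {1} \<times> UNIV}"

text \<open>Elements are K-valued functions on diagrams supported on WB r s,
  i.e. K-linear combinations of walled Brauer diagrams.\<close>

definition wb_carrier :: "nat \<Rightarrow> nat \<Rightarrow> (diagram \<Rightarrow> 'k::field) set" where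
  "wb_carrier r s = {a. \<forall>d. d \<notin> WB r s \<longrightarrow> a d = 0}"

definition wb_mult :: "nat \<Rightarrow> nat \<Rightarrow> 'k::field \<Rightarrow>
    (diagram \<Rightarrow> 'k) \<Rightarrow> (diagram \<Rightarrow> 'k) \<Rightarrow> (diagram \<Rightarrow> 'k)" where
  "wb_mult r s \<delta> a b = (\<lambda>d. \<Sum>d1\<in>WB r s. \<Sum>d2\<in>WB r s.
      if compose (r + s) d1 d2 = d
      then a d1 * b d2 * \<delta> ^ loops (r + s) d1 d2 else 0)"

definition wb_ideal :: "nat \<Rightarrow> nat \<Rightarrow> 'k::field \<Rightarrow> (diagram \<Rightarrow> 'k) set \<Rightarrow> bool" where
  "wb_ideal r s \<delta> I \<longleftrightarrow> I \<subseteq> wb_carrier r s \<and> (\<lambda>_. 0) \<in> I \<and>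
     (\<forall>x\<in>I. \<forall>y\<in>I. (\<lambda>d. x d + y d) \<in> I) \<and>
     (\<forall>c. \<forall>x\<in>I. (\<lambda>d. c * x d) \<in> I) \<and>
     (\<forall>a\<in>wb_carrier r s. \<forall>x\<in>I. wb_mult r s \<delta> a x \<in> I \<and> wb_mult r s \<delta> x a \<in> I)"

fun wb_prod :: "nat \<Rightarrow> nat \<Rightarrow> 'k::field \<Rightarrow> (diagram \<Rightarrow> 'k) list \<Rightarrow> (diagram \<Rightarrow> 'k)" where
  "wb_prod r s \<delta> [] = (\<lambda>_. 0)"
| "wb_prod r s \<delta> [x] = x"
| "wb_prod r s \<delta> (x # y # ys) = wb_mult r s \<delta> x (wb_prod r s \<delta> (y # ys))"

definition wb_nilpotent_ideal :: "nat \<Rightarrow> nat \<Rightarrow> 'k::field \<Rightarrow> (diagram \<Rightarrow> 'k) set \<Rightarrow> bool" where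
  "wb_nilpotent_ideal r s \<delta> I \<longleftrightarrow> wb_ideal r s \<delta> I \<and>
     (\<exists>m>0. \<forall>xs. length xs = m \<longrightarrow> set xs \<subseteq> I \<longrightarrow> wb_prod r s \<delta> xs = (\<lambda>_. 0))"

text \<open>A finite-dimensional algebra is semisimple iff its (Jacobson) radical is
  zero, i.e. iff it has no nonzero nilpotent two-sided ideal.\<close>

definition wb_semisimple :: "nat \<Rightarrow> nat \<Rightarrow> 'k::field \<Rightarrow> bool" where
  "wb_semisimple r s \<delta> \<longleftrightarrow>
     (\<forall>I. wb_nilpotent_ideal r s \<delta> I \<longrightarrow> I = {\<lambda>_. 0})"

end

theory Submission
  imports Defs "HOL-Library.FuncSet"
begin

locale two_inv =
  fixes V :: "'v set" and P Q :: "'v \<Rightarrow> 'v"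
  assumes finV: "finite V"
    and PV: "v \<in> V \<Longrightarrow> P v \<in> V" and QV: "v \<in> V \<Longrightarrow> Q v \<in> V"
    and PP: "v \<in> V \<Longrightarrow> P (P v) = v" and QQ: "v \<in> V \<Longrightarrow> Q (Q v) = v"
begin

definition S :: "nat \<Rightarrow> 'v \<Rightarrow> 'v" where
  "S k = (if even k then P else Q)"

fun w :: "'v \<Rightarrow> nat \<Rightarrow> 'v" where
  "w x 0 = x"
| "w x (Suc k) = S k (w x k)"

definition R :: "('v \<times> 'v) set" where
  "R = {(v, P v) | v. v \<in> V} \<union> {(v, Q v) | v. v \<in> V}"

lemma SV: "v \<in> V \<Longrightarrow> S k v \<in> V"
  by (simp add: S_def PV QV)

lemma SS: "v \<in> V \<Longrightarrow> S k (S k v) = v"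
  by (simp add: S_def PP QQ)

lemma wV: "x \<in> V \<Longrightarrow> w x k \<in> V"
  by (induction k) (auto simp: SV)

lemma S_Suc_eq: "S (Suc k) = (if even k then Q else P)"
  by (simp add: S_def)

lemma w_back: "x \<in> V \<Longrightarrow> S k (w x (Suc k)) = w x k"
  by (simp add: SS wV)

lemma w_inj:
  assumes xV: "x \<in> V" and Qx: "Q x = x" and Px: "P x \<noteq> x"
  shows "(\<forall>k<j. S k (w x k) \<noteq> w x k) \<Longrightarrow> inj_on (w x) {..j}"
proof (induction j)
  case 0
  then show ?case by simp
next
  case (Suc j)
  have IH: "inj_on (w x) {..j}" using Suc by auto
  have nf: "\<And>k. k \<le> j \<Longrightarrow> S k (w x k) \<noteq> w x k" using Suc.prems by auto
  have notin: "w x (Suc j) \<notin> w x ` {..j}"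
  proof
    assume "w x (Suc j) \<in> w x ` {..j}"
    then obtain i where i: "i \<le> j" "w x (Suc j) = w x i" by auto
    have bj: "w x j = S j (w x (Suc j))" using w_back[OF xV] by simp
    show False
    proof (cases i)
      case 0
      then have e: "w x (Suc j) = x" using i by simp
      show False
      proof (cases "even j")
        case True
        then have "w x j = P x" using bj e by (simp add: S_def)
        moreover have "w x 1 = P x" by (simp add: S_def)
        ultimately have "w x j = w x 1" by simp
        moreover have "j \<noteq> 0" using True e Px by (cases j) (auto simp: S_def)
        ultimately have "j = 1" by (intro inj_onD[OF IH]) auto
        then show False using True by simp
      next
        case False
        then have "w x j = x" using bj e Qx by (simp add: S_def)
        then have "j = 0" by (intro inj_onD[OF IH]) auto
        then show False using False by simp
      qed
    next
      case (Suc i')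
      have bi: "w x i' = S i' (w x (Suc i'))" using w_back[OF xV] by simp
      show False
      proof (cases "even j = even i'")
        case True
        then have "S j = S i'" by (simp add: S_def)
        then have "w x j = w x i'" using bj bi i Suc by simp
        then have "j = i'" using i Suc by (intro inj_onD[OF IH]) auto
        then show False using i Suc by simp
      next
        case False
        then have "S j = S (Suc i')" by (simp add: S_def)
        then have wj: "w x j = w x (Suc (Suc i'))" using bj i Suc by simp
        show False
        proof (cases "Suc (Suc i') \<le> j")
          case True
          then have "j = Suc (Suc i')" using wj by (intro inj_onD[OF IH]) auto
          then show False using False by simp
        next
          case F2: False
          then have "j = Suc i'" using i Suc by simp
          then have "S j (w x j) = w x j" using i Suc by simp
          then show False using nf by simp
        qed
      qed
    qed
  qed
  have "{..Suc j} = insert (Suc j) {..j}" by auto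
  then show ?case using IH notin by simp
qed

lemma ex_end:
  assumes xV: "x \<in> V" and Qx: "Q x = x" and Px: "P x \<noteq> x"
  shows "\<exists>k. S k (w x k) = w x k"
proof (rule ccontr)
  assume "\<not> ?thesis"
  then have "inj_on (w x) {..card V}" using w_inj[OF assms] by auto
  then have "card (w x ` {..card V}) = Suc (card V)" by (simp add: card_image)
  moreover have "w x ` {..card V} \<subseteq> V" using wV[OF xV] by auto
  ultimately have "Suc (card V) \<le> card V" using card_mono[OF finV] by metis
  then show False by simp
qed

definition K :: "'v \<Rightarrow> nat" where
  "K x = (LEAST k. S k (w x k) = w x k)"

context
  fixes x assumes xV: "x \<in> V" and Qx: "Q x = x" and Px: "P x \<noteq> x"
begin

lemma K_end: "S (K x) (w x (K x)) = w x (K x)"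
  unfolding K_def using ex_end[OF xV Qx Px] by (rule LeastI_ex)

lemma K_before: "k < K x \<Longrightarrow> S k (w x k) \<noteq> w x k"
  unfolding K_def using not_less_Least by blast

lemma K_pos: "K x > 0"
proof (rule ccontr)
  assume "\<not> K x > 0"
  then have "K x = 0" by simp
  then show False using K_end Px by (simp add: S_def)
qed

lemma K_inj: "inj_on (w x) {..K x}"
  using w_inj[OF xV Qx Px] K_before by blast

lemma interior_mid:
  assumes "0 < k" "k < K x"
  shows "P (w x k) \<noteq> w x k \<and> Q (w x k) \<noteq> w x k"
proof -
  have a: "S k (w x k) \<noteq> w x k" using K_before assms by simp
  obtain k' where k': "k = Suc k'" using assms by (cases k) auto
  have b: "S k' (w x k') \<noteq> w x k'" using K_before assms k' by simp
  have c: "S k' (w x k) \<noteq> w x k"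
  proof
    assume "S k' (w x k) = w x k"
    moreover have "S k' (w x k) = w x k'" using w_back[OF xV] k' by simp
    ultimately have "w x k' = w x k" by simp
    then show False using b k' by simp
  qed
  show ?thesis using a c k' by (cases "even k'") (auto simp: S_def)
qed

lemma w_R: "(x, w x k) \<in> R\<^sup>*"
proof (induction k)
  case 0 then show ?case by simp
next
  case (Suc k)
  have "(w x k, w x (Suc k)) \<in> R" using wV[OF xV, of k] by (auto simp: R_def S_def)
  then show ?case using Suc by (meson rtrancl_into_rtrancl)
qed

lemma W_closed:
  assumes "v \<in> w x ` {..K x}"
  shows "P v \<in> w x ` {..K x} \<and> Q v \<in> w x ` {..K x}"
proof -
  obtain k where k: "k \<le> K x" "v = w x k" using assms by auto
  have s1: "S k v \<in> w x ` {..K x}"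
  proof (cases "k < K x")
    case True
    then have "S k v = w x (Suc k)" using k by simp
    moreover have "Suc k \<in> {..K x}" using True by simp
    ultimately show ?thesis by (metis image_eqI)
  next
    case False
    then have "k = K x" using k by simp
    then show ?thesis using K_end k by auto
  qed
  have s2: "(if even k then Q else P) v \<in> w x ` {..K x}"
  proof (cases k)
    case 0
    then have "v = w x 0" "Q v = v" using k Qx by auto
    then have "(if even k then Q else P) v = w x 0" using \<open>k = 0\<close> by simp
    moreover have "w x 0 \<in> w x ` {..K x}" by blast
    ultimately show ?thesis by simp
  next
    case (Suc k')
    then have "S k' v = w x k'" using w_back[OF xV] k by simp
    moreover have "S k' = (if even k then Q else P)" using Suc by (simp add: S_def)
    ultimately show ?thesis using Suc k by auto
  qed
  show ?thesis using s1 s2 by (cases "even k") (auto simp: S_def)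
qed

lemma reach_W: "(x, z) \<in> R\<^sup>* \<Longrightarrow> z \<in> w x ` {..K x}"
proof (induction rule: rtrancl_induct)
  case base
  then show ?case by force
next
  case (step y z)
  then show ?case using W_closed by (auto simp: R_def)
qed

lemma y_ne_x: "w x (K x) \<noteq> x"
proof
  assume "w x (K x) = x"
  then have "w x (K x) = w x 0" by simp
  then have "K x = 0" by (intro inj_onD[OF K_inj]) auto
  then show False using K_pos by simp
qed

lemma y_fix: "P (w x (K x)) = w x (K x) \<or> Q (w x (K x)) = w x (K x)"
  using K_end by (auto simp: S_def split: if_splits)

lemma reach_fix:
  assumes "(x, z) \<in> R\<^sup>*" "P z = z \<or> Q z = z"
  shows "z = x \<or> z = w x (K x)"
proof -
  obtain k where k: "k \<le> K x" "z = w x k" using reach_W[OF assms(1)] by auto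
  show ?thesis
  proof (cases "k = 0 \<or> k = K x")
    case True then show ?thesis using k by auto
  next
    case False
    then have "0 < k" "k < K x" using k by auto
    then show ?thesis using interior_mid assms(2) k by blast
  qed
qed

lemma walled_inv:
  fixes \<sigma> :: "bool \<Rightarrow> 'v \<Rightarrow> bool"
  assumes sP: "\<And>v. v \<in> V \<Longrightarrow> P v \<noteq> v \<Longrightarrow> \<sigma> True (P v) \<noteq> \<sigma> True v"
    and sQ: "\<And>v. v \<in> V \<Longrightarrow> Q v \<noteq> v \<Longrightarrow> \<sigma> False (Q v) \<noteq> \<sigma> False v"
    and mid: "\<And>v. v \<in> V \<Longrightarrow> P v \<noteq> v \<Longrightarrow> Q v \<noteq> v \<Longrightarrow> \<sigma> True v \<noteq> \<sigma> False v"
  shows "(Q (w x (K x)) = w x (K x) \<longrightarrow> P (w x (K x)) \<noteq> w x (K x) \<longrightarrow> \<sigma> True (w x (K x)) \<noteq> \<sigma> True x)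
       \<and> (P (w x (K x)) = w x (K x) \<longrightarrow> Q (w x (K x)) \<noteq> w x (K x) \<longrightarrow> \<sigma> False (w x (K x)) \<noteq> \<sigma> True x)"
proof -
  have sS: "\<And>k v. v \<in> V \<Longrightarrow> S k v \<noteq> v \<Longrightarrow> \<sigma> (even k) (S k v) \<noteq> \<sigma> (even k) v"
    using sP sQ by (auto simp: S_def)
  have inv: "k < K x \<Longrightarrow> \<sigma> (even k) (w x k) = \<sigma> True x" for k
  proof (induction k)
    case 0 then show ?case by simp
  next
    case (Suc k)
    have m: "P (w x (Suc k)) \<noteq> w x (Suc k) \<and> Q (w x (Suc k)) \<noteq> w x (Suc k)"
      using interior_mid[of "Suc k"] Suc.prems by blast
    have "\<sigma> (even k) (w x (Suc k)) \<noteq> \<sigma> (even k) (w x k)"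
      using sS[OF wV[OF xV], of k k] K_before Suc.prems by simp
    moreover have "\<sigma> (even (Suc k)) (w x (Suc k)) \<noteq> \<sigma> (even k) (w x (Suc k))"
      using mid[OF wV[OF xV, of "Suc k"]] m by (cases "even k") auto
    ultimately show ?case using Suc by auto
  qed
  obtain k' where k': "K x = Suc k'" using K_pos by (cases "K x") auto
  have A: "\<sigma> (even k') (w x (K x)) \<noteq> \<sigma> True x"
  proof -
    have "\<sigma> (even k') (w x (Suc k')) \<noteq> \<sigma> (even k') (w x k')"
      using sS[OF wV[OF xV], of k' k'] K_before k' by simp
    then show ?thesis using inv[of k'] k' by simp
  qed
  have E: "S (Suc k') (w x (K x)) = w x (K x)" using K_end k' by simp
  show ?thesis using A E k' by (cases "even k'") (auto simp: S_def)
qed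

end

end


definition VV :: "nat \<Rightarrow> (nat \<times> nat) set" where
  "VV n = {..(2::nat)} \<times> {..<n}"

definition P1 :: "diagram \<Rightarrow> nat \<times> nat \<Rightarrow> nat \<times> nat" where
  "P1 d1 v = (if fst v \<le> 1 then lift_top (d1 (fst v = 1, snd v)) else v)"

definition P2 :: "diagram \<Rightarrow> nat \<times> nat \<Rightarrow> nat \<times> nat" where
  "P2 d2 v = (if 1 \<le> fst v then lift_bot (d2 (fst v = 2, snd v)) else v)"

lemma pts_iff: "x \<in> pts n \<longleftrightarrow> snd x < n"
  by (cases x) (auto simp: pts_def)

lemma lift_top_inj: "lift_top x = lift_top y \<longleftrightarrow> x = y"
  by (cases x; cases y) (auto simp: lift_top_def)

lemma lift_bot_inj: "lift_bot x = lift_bot y \<longleftrightarrow> x = y"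
  by (cases x; cases y) (auto simp: lift_bot_def)

lemma outer_inj: "outer x = outer y \<longleftrightarrow> x = y"
  by (cases x; cases y) (auto simp: outer_def)

context
  fixes n :: nat and d1 d2 :: diagram
  assumes b1: "brauer_diagram n d1" and b2: "brauer_diagram n d2"
begin

lemma d1_pts: "x \<in> pts n \<Longrightarrow> d1 x \<in> pts n" and d1_ne: "x \<in> pts n \<Longrightarrow> d1 x \<noteq> x"
  and d1_inv: "x \<in> pts n \<Longrightarrow> d1 (d1 x) = x"
  using b1 by (auto simp: brauer_diagram_def)

lemma d2_pts: "x \<in> pts n \<Longrightarrow> d2 x \<in> pts n" and d2_ne: "x \<in> pts n \<Longrightarrow> d2 x \<noteq> x"
  and d2_inv: "x \<in> pts n \<Longrightarrow> d2 (d2 x) = x"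
  using b2 by (auto simp: brauer_diagram_def)

lemma ti12: "two_inv (VV n) (P1 d1) (P2 d2)"
proof
  show "finite (VV n)" by (simp add: VV_def)
next
  fix v assume v: "v \<in> VV n"
  obtain l k where lk: "v = (l, k)" by (cases v)
  have k: "k < n" "l \<le> 2" using v lk by (auto simp: VV_def)
  show "P1 d1 v \<in> VV n"
    using d1_pts[of "(l = 1, k)"] k lk
    by (auto simp: P1_def VV_def lift_top_def pts_iff split: prod.splits)
  show "P2 d2 v \<in> VV n"
    using d2_pts[of "(l = 2, k)"] k lk
    by (auto simp: P2_def VV_def lift_bot_def pts_iff split: prod.splits)
  show "P1 d1 (P1 d1 v) = v"
  proof (cases "l \<le> 1")
    case True
    obtain b' k' where e: "d1 (l = 1, k) = (b', k')" by (cases "d1 (l = 1, k)")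
    have "d1 (b', k') = (l = 1, k)" using d1_inv[of "(l=1,k)"] e k by (simp add: pts_iff)
    then show ?thesis using True e lk
      by (auto simp: P1_def lift_top_def)
  next
    case False
    then show ?thesis using lk by (simp add: P1_def)
  qed
  show "P2 d2 (P2 d2 v) = v"
  proof (cases "1 \<le> l")
    case True
    obtain b' k' where e: "d2 (l = 2, k) = (b', k')" by (cases "d2 (l = 2, k)")
    have "d2 (b', k') = (l = 2, k)" using d2_inv[of "(l=2,k)"] e k by (simp add: pts_iff)
    then show ?thesis using True e lk k
      by (auto simp: P2_def lift_bot_def)
  next
    case False
    then show ?thesis using lk by (simp add: P2_def)
  qed
qed

lemma ti21: "two_inv (VV n) (P2 d2) (P1 d1)"
  using ti12 unfolding two_inv_def by blast

abbreviation "RR \<equiv> two_inv.R (VV n) (P1 d1) (P2 d2)"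

lemma R21: "two_inv.R (VV n) (P2 d2) (P1 d1) = RR"
  by (auto simp: two_inv.R_def[OF ti12] two_inv.R_def[OF ti21])

lemma conn_eq: "stack_conn n d1 d2 = RR\<^sup>*"
proof -
  have E1: "stack_edges n d1 d2 \<subseteq> RR"
  proof
    fix e assume "e \<in> stack_edges n d1 d2"
    then consider x where "x \<in> pts n" "e = (lift_top x, lift_top (d1 x))"
      | x where "x \<in> pts n" "e = (lift_bot x, lift_bot (d2 x))"
      unfolding stack_edges_def by blast
    then show "e \<in> RR"
    proof cases
      case 1
      obtain b k where x: "x = (b, k)" by (cases x)
      have "lift_top x \<in> VV n" using 1 x by (auto simp: lift_top_def VV_def pts_iff)
      moreover have "P1 d1 (lift_top x) = lift_top (d1 x)" using x
        by (auto simp: P1_def lift_top_def)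
      moreover have "(lift_top x, P1 d1 (lift_top x)) \<in> RR"
        using \<open>lift_top x \<in> VV n\<close> unfolding two_inv.R_def[OF ti12] by blast
      ultimately show ?thesis using 1 by simp
    next
      case 2
      obtain b k where x: "x = (b, k)" by (cases x)
      have "lift_bot x \<in> VV n" using 2 x by (auto simp: lift_bot_def VV_def pts_iff)
      moreover have "P2 d2 (lift_bot x) = lift_bot (d2 x)" using x
        by (auto simp: P2_def lift_bot_def)
      moreover have "(lift_bot x, P2 d2 (lift_bot x)) \<in> RR"
        using \<open>lift_bot x \<in> VV n\<close> unfolding two_inv.R_def[OF ti12] by blast
      ultimately show ?thesis using 2 by simp
    qed
  qed
  have E2: "RR \<subseteq> (stack_edges n d1 d2)\<^sup>="
  proof
    fix e assume "e \<in> RR"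
    then consider v where "v \<in> VV n" "e = (v, P1 d1 v)" | v where "v \<in> VV n" "e = (v, P2 d2 v)"
      by (auto simp: two_inv.R_def[OF ti12])
    then show "e \<in> (stack_edges n d1 d2)\<^sup>="
    proof cases
      case 1
      obtain l k where v: "v = (l, k)" by (cases v)
      show ?thesis
      proof (cases "l \<le> 1")
        case True
        have "v = lift_top (l = 1, k)" using True v by (auto simp: lift_top_def)
        moreover have "(l = 1, k) \<in> pts n" using 1 v by (auto simp: VV_def pts_iff)
        moreover have "P1 d1 v = lift_top (d1 (l = 1, k))" using True v by (simp add: P1_def)
        ultimately show ?thesis using 1 unfolding stack_edges_def by blast
      next
        case False
        then show ?thesis using 1 v by (simp add: P1_def)
      qed
    next
      case 2
      obtain l k where v: "v = (l, k)" by (cases v)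
      show ?thesis
      proof (cases "1 \<le> l")
        case True
        have "l \<le> 2" using 2 v by (auto simp: VV_def)
        then have "v = lift_bot (l = 2, k)" using True v by (auto simp: lift_bot_def)
        moreover have "(l = 2, k) \<in> pts n" using 2 v by (auto simp: VV_def pts_iff)
        moreover have "P2 d2 v = lift_bot (d2 (l = 2, k))" using True v by (simp add: P2_def)
        ultimately show ?thesis using 2 unfolding stack_edges_def by blast
      next
        case False
        then show ?thesis using 2 v by (simp add: P2_def)
      qed
    qed
  qed
  have "RR\<^sup>* \<subseteq> ((stack_edges n d1 d2)\<^sup>=)\<^sup>*" using E2 by (rule rtrancl_mono)
  then have "RR\<^sup>* \<subseteq> (stack_edges n d1 d2)\<^sup>*" by simp
  moreover have "(stack_edges n d1 d2)\<^sup>* \<subseteq> RR\<^sup>*" using E1 by (rule rtrancl_mono)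
  ultimately show ?thesis unfolding stack_conn_def by blast
qed

lemma RR_sym: "(u, v) \<in> RR \<Longrightarrow> (v, u) \<in> RR"
proof -
  assume "(u, v) \<in> RR"
  then consider "u \<in> VV n" "v = P1 d1 u" | "u \<in> VV n" "v = P2 d2 u"
    unfolding two_inv.R_def[OF ti12] by blast
  then show ?thesis
  proof cases
    case 1
    then have "v \<in> VV n" "P1 d1 v = u" using two_inv.PP[OF ti12] two_inv.PV[OF ti12] by auto
    then show ?thesis unfolding two_inv.R_def[OF ti12] by blast
  next
    case 2
    then have "v \<in> VV n" "P2 d2 v = u" using two_inv.QQ[OF ti12] two_inv.QV[OF ti12] by auto
    then show ?thesis unfolding two_inv.R_def[OF ti12] by blast
  qed
qed

lemma conn_sym: "(u, v) \<in> stack_conn n d1 d2 \<Longrightarrow> (v, u) \<in> stack_conn n d1 d2"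
proof -
  assume "(u, v) \<in> stack_conn n d1 d2"
  then have "(u, v) \<in> RR\<^sup>*" by (simp add: conn_eq)
  then have "(v, u) \<in> RR\<^sup>*"
  proof (induction rule: rtrancl_induct)
    case base then show ?case by simp
  next
    case (step y z)
    then show ?case using RR_sym by (meson converse_rtrancl_into_rtrancl)
  qed
  then show ?thesis by (simp add: conn_eq)
qed

lemma outer_VV: "x \<in> pts n \<Longrightarrow> outer x \<in> VV n"
  by (cases x) (auto simp: outer_def VV_def pts_iff)

lemma fix_outer: "v \<in> VV n \<Longrightarrow> (P1 d1 v = v \<or> P2 d2 v = v) \<Longrightarrow> \<exists>y\<in>pts n. v = outer y"
proof -
  assume v: "v \<in> VV n" and f: "P1 d1 v = v \<or> P2 d2 v = v"
  obtain l k where lk: "v = (l, k)" by (cases v)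
  have "l \<noteq> 1"
  proof
    assume l: "l = 1"
    have k: "(True, k) \<in> pts n" using v lk by (auto simp: VV_def pts_iff)
    have "P1 d1 v \<noteq> v"
      using d1_ne[OF k] l lk lift_top_inj[of "d1 (True, k)" "(True,k)"] by (auto simp: P1_def lift_top_def)
    moreover have "P2 d2 v \<noteq> v"
      using d2_ne[of "(False,k)"] k l lk lift_bot_inj[of "d2 (False, k)" "(False,k)"]
      by (auto simp: P2_def lift_bot_def pts_iff)
    ultimately show False using f by simp
  qed
  then have "v = outer (l = 2, k)" using lk v by (auto simp: outer_def VV_def)
  moreover have "(l = 2, k) \<in> pts n" using v lk by (auto simp: VV_def pts_iff)
  ultimately show ?thesis by blast
qed

lemma outer_fix: "x \<in> pts n \<Longrightarrow> (fst x = False \<longrightarrow> P2 d2 (outer x) = outer x \<and> P1 d1 (outer x) \<noteq> outer x)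
   \<and> (fst x = True \<longrightarrow> P1 d1 (outer x) = outer x \<and> P2 d2 (outer x) \<noteq> outer x)"
proof -
  assume x: "x \<in> pts n"
  obtain b k where bk: "x = (b, k)" by (cases x)
  show ?thesis
    using d1_ne[OF x] d2_ne[OF x] bk lift_top_inj[of "d1 x" x] lift_bot_inj[of "d2 x" x]
    by (auto simp: P1_def P2_def outer_def lift_top_def lift_bot_def)
qed

lemma matching:
  assumes x: "x \<in> pts n"
  shows "\<exists>!y. y \<in> pts n \<and> y \<noteq> x \<and> (outer x, outer y) \<in> stack_conn n d1 d2"
proof (cases "fst x")
  case False
  note T = ti12
  have Q: "P2 d2 (outer x) = outer x" and P: "P1 d1 (outer x) \<noteq> outer x"
    using outer_fix[OF x] False by auto
  define z where "z = two_inv.w (P1 d1) (P2 d2) (outer x) (two_inv.K (P1 d1) (P2 d2) (outer x))"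
  have zV: "z \<in> VV n" unfolding z_def by (rule two_inv.wV[OF T outer_VV[OF x]])
  have zf: "P1 d1 z = z \<or> P2 d2 z = z"
    unfolding z_def by (rule two_inv.y_fix[OF T outer_VV[OF x] Q P])
  obtain y where y: "y \<in> pts n" "z = outer y" using fix_outer[OF zV zf] by blast
  have zr: "(outer x, z) \<in> RR\<^sup>*" unfolding z_def by (rule two_inv.w_R[OF T outer_VV[OF x] Q P])
  have zx: "z \<noteq> outer x" unfolding z_def by (rule two_inv.y_ne_x[OF T outer_VV[OF x] Q P])
  show ?thesis
  proof (rule ex1I[of _ y])
    show "y \<in> pts n \<and> y \<noteq> x \<and> (outer x, outer y) \<in> stack_conn n d1 d2"
      using y zr zx conn_eq by auto
  next
    fix y' assume y': "y' \<in> pts n \<and> y' \<noteq> x \<and> (outer x, outer y') \<in> stack_conn n d1 d2"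
    have "P1 d1 (outer y') = outer y' \<or> P2 d2 (outer y') = outer y'"
      using outer_fix[of y'] y' by (cases "fst y'") auto
    then have "outer y' = outer x \<or> outer y' = z"
      using two_inv.reach_fix[OF T outer_VV[OF x] Q P, of "outer y'"] y' conn_eq z_def by auto
    then show "y' = y" using y' y outer_inj by metis
  qed
next
  case True
  note T = ti21
  have Q: "P1 d1 (outer x) = outer x" and P: "P2 d2 (outer x) \<noteq> outer x"
    using outer_fix[OF x] True by auto
  define z where "z = two_inv.w (P2 d2) (P1 d1) (outer x) (two_inv.K (P2 d2) (P1 d1) (outer x))"
  have zV: "z \<in> VV n" unfolding z_def by (rule two_inv.wV[OF T outer_VV[OF x]])
  have zf: "P1 d1 z = z \<or> P2 d2 z = z"
    using two_inv.y_fix[OF T outer_VV[OF x] Q P] unfolding z_def by blast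
  obtain y where y: "y \<in> pts n" "z = outer y" using fix_outer[OF zV zf] by blast
  have zr: "(outer x, z) \<in> RR\<^sup>*" unfolding z_def using two_inv.w_R[OF T outer_VV[OF x] Q P] R21 by simp
  have zx: "z \<noteq> outer x" unfolding z_def by (rule two_inv.y_ne_x[OF T outer_VV[OF x] Q P])
  show ?thesis
  proof (rule ex1I[of _ y])
    show "y \<in> pts n \<and> y \<noteq> x \<and> (outer x, outer y) \<in> stack_conn n d1 d2"
      using y zr zx conn_eq by auto
  next
    fix y' assume y': "y' \<in> pts n \<and> y' \<noteq> x \<and> (outer x, outer y') \<in> stack_conn n d1 d2"
    have "P2 d2 (outer y') = outer y' \<or> P1 d1 (outer y') = outer y'"
      using outer_fix[of y'] y' by (cases "fst y'") auto
    then have "outer y' = outer x \<or> outer y' = z"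
      using two_inv.reach_fix[OF T outer_VV[OF x] Q P, of "outer y'"] y' conn_eq z_def R21 by auto
    then show "y' = y" using y' y outer_inj by metis
  qed
qed

lemma compose_prop:
  assumes x: "x \<in> pts n"
  shows "Defs.compose n d1 d2 x \<in> pts n \<and> Defs.compose n d1 d2 x \<noteq> x \<and>
         (outer x, outer (Defs.compose n d1 d2 x)) \<in> stack_conn n d1 d2"
proof -
  have "Defs.compose n d1 d2 x = (THE y. y \<in> pts n \<and> y \<noteq> x \<and> (outer x, outer y) \<in> stack_conn n d1 d2)"
    using x by (simp add: Defs.compose_def)
  then show ?thesis using theI'[OF matching[OF x]] by simp
qed

lemma compose_unique:
  assumes x: "x \<in> pts n" and y: "y \<in> pts n" "y \<noteq> x" "(outer x, outer y) \<in> stack_conn n d1 d2"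
  shows "Defs.compose n d1 d2 x = y"
  using matching[OF x] compose_prop[OF x] y by blast

lemma brauer_compose: "brauer_diagram n (Defs.compose n d1 d2)"
  unfolding brauer_diagram_def
proof (intro conjI ballI allI impI)
  fix x assume x: "x \<in> pts n"
  show "Defs.compose n d1 d2 x \<in> pts n" "Defs.compose n d1 d2 x \<noteq> x" using compose_prop[OF x] by auto
  have c: "Defs.compose n d1 d2 x \<in> pts n" "x \<noteq> Defs.compose n d1 d2 x"
    "(outer (Defs.compose n d1 d2 x), outer x) \<in> stack_conn n d1 d2"
    using compose_prop[OF x] conn_sym by auto
  show "Defs.compose n d1 d2 (Defs.compose n d1 d2 x) = x"
    by (rule compose_unique[OF c(1) x c(2) c(3)])
next
  fix x assume "x \<notin> pts n"
  then show "Defs.compose n d1 d2 x = x" by (simp add: Defs.compose_def)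
qed

end


definition sg :: "nat \<Rightarrow> bool \<Rightarrow> nat \<times> nat \<Rightarrow> bool" where
  "sg r b v = ((snd v < r) \<noteq> (fst v = (if b then 1 else 2)))"

lemma walled_brauer: "walled_diagram r s d \<Longrightarrow> brauer_diagram (r + s) d"
  by (simp add: walled_diagram_def)

context
  fixes r s :: nat and d1 d2 :: diagram
  assumes w1: "walled_diagram r s d1" and w2: "walled_diagram r s d2"
begin

lemma b1: "brauer_diagram (r + s) d1" and b2: "brauer_diagram (r + s) d2"
  using w1 w2 by (auto simp: walled_diagram_def)

lemma wc1: "x \<in> pts (r + s) \<Longrightarrow> (fst x \<noteq> fst (d1 x) \<longrightarrow> (snd x < r \<longleftrightarrow> snd (d1 x) < r)) \<and>
   (fst x = fst (d1 x) \<longrightarrow> (snd x < r \<longleftrightarrow> \<not> snd (d1 x) < r))"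
  using w1 by (auto simp: walled_diagram_def left_of_wall_def)

lemma wc2: "x \<in> pts (r + s) \<Longrightarrow> (fst x \<noteq> fst (d2 x) \<longrightarrow> (snd x < r \<longleftrightarrow> snd (d2 x) < r)) \<and>
   (fst x = fst (d2 x) \<longrightarrow> (snd x < r \<longleftrightarrow> \<not> snd (d2 x) < r))"
  using w2 by (auto simp: walled_diagram_def left_of_wall_def)

lemma sgP1: "v \<in> VV (r + s) \<Longrightarrow> P1 d1 v \<noteq> v \<Longrightarrow> sg r True (P1 d1 v) \<noteq> sg r True v"
proof -
  assume v: "v \<in> VV (r + s)" and ne: "P1 d1 v \<noteq> v"
  obtain l k where lk: "v = (l, k)" by (cases v)
  have l: "l \<le> 1" using ne lk by (auto simp: P1_def split: if_splits)
  have u: "(l = 1, k) \<in> pts (r + s)" using v lk by (auto simp: VV_def pts_iff)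
  obtain b' k' where e: "d1 (l = 1, k) = (b', k')" by (cases "d1 (l = 1, k)")
  have "l = 0 \<or> l = 1" using l by auto
  then show ?thesis using wc1[OF u] e l lk
    by (elim disjE) (auto simp: sg_def P1_def lift_top_def)
qed

lemma sgP2: "v \<in> VV (r + s) \<Longrightarrow> P2 d2 v \<noteq> v \<Longrightarrow> sg r False (P2 d2 v) \<noteq> sg r False v"
proof -
  assume v: "v \<in> VV (r + s)" and ne: "P2 d2 v \<noteq> v"
  obtain l k where lk: "v = (l, k)" by (cases v)
  have l: "1 \<le> l" "l \<le> 2" using ne lk v by (auto simp: P2_def VV_def split: if_splits)
  have u: "(l = 2, k) \<in> pts (r + s)" using v lk by (auto simp: VV_def pts_iff)
  obtain b' k' where e: "d2 (l = 2, k) = (b', k')" by (cases "d2 (l = 2, k)")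
  have "l = 1 \<or> l = 2" using l by auto
  then show ?thesis using wc2[OF u] e l lk
    by (elim disjE) (auto simp: sg_def P2_def lift_bot_def)
qed

lemma sgmid: "v \<in> VV (r + s) \<Longrightarrow> P1 d1 v \<noteq> v \<Longrightarrow> P2 d2 v \<noteq> v \<Longrightarrow> sg r True v \<noteq> sg r False v"
  by (cases v) (auto simp: sg_def P1_def P2_def VV_def split: if_splits)

lemma walled_compose: "walled_diagram r s (Defs.compose (r + s) d1 d2)"
  unfolding walled_diagram_def
proof (intro conjI ballI)
  show "brauer_diagram (r + s) (Defs.compose (r + s) d1 d2)" by (rule brauer_compose[OF b1 b2])
next
  fix x assume x: "x \<in> pts (r + s)"
  define n where "n = r + s"
  have xn: "x \<in> pts n" using x n_def by simp
  define y where "y = Defs.compose n d1 d2 x"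
  have yp: "y \<in> pts n" "y \<noteq> x" "(outer x, outer y) \<in> stack_conn n d1 d2"
    using compose_prop[OF b1[folded n_def] b2[folded n_def] xn] y_def by auto
  have goal: "(fst x \<noteq> fst y \<longrightarrow> (snd x < r \<longleftrightarrow> snd y < r)) \<and>
              (fst x = fst y \<longrightarrow> (snd x < r \<longleftrightarrow> \<not> snd y < r))"
  proof (cases "fst x")
    case False
    note T = ti12[OF b1[folded n_def] b2[folded n_def]]
    have Q: "P2 d2 (outer x) = outer x" and P: "P1 d1 (outer x) \<noteq> outer x"
      using outer_fix[OF b1[folded n_def] b2[folded n_def] xn] False by auto
    define z where "z = two_inv.w (P1 d1) (P2 d2) (outer x) (two_inv.K (P1 d1) (P2 d2) (outer x))"
    have zV: "z \<in> VV n" unfolding z_def by (rule two_inv.wV[OF T outer_VV[OF b1[folded n_def] b2[folded n_def] xn]])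
    have zf: "P1 d1 z = z \<or> P2 d2 z = z"
      unfolding z_def by (rule two_inv.y_fix[OF T outer_VV[OF b1[folded n_def] b2[folded n_def] xn] Q P])
    obtain y' where y': "y' \<in> pts n" "z = outer y'"
      using fix_outer[OF b1[folded n_def] b2[folded n_def] zV zf] by blast
    have zr: "(outer x, z) \<in> stack_conn n d1 d2" unfolding z_def
      using two_inv.w_R[OF T outer_VV[OF b1[folded n_def] b2[folded n_def] xn] Q P]
        conn_eq[OF b1[folded n_def] b2[folded n_def]] by simp
    have zx: "z \<noteq> outer x" unfolding z_def by (rule two_inv.y_ne_x[OF T outer_VV[OF b1[folded n_def] b2[folded n_def] xn] Q P])
    have yy: "y' = y" using compose_unique[OF b1[folded n_def] b2[folded n_def] xn y'(1)] zx zr y' y_def by auto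
    have sig: "(P2 d2 z = z \<longrightarrow> P1 d1 z \<noteq> z \<longrightarrow> sg r True z \<noteq> sg r True (outer x)) \<and>
        (P1 d1 z = z \<longrightarrow> P2 d2 z \<noteq> z \<longrightarrow> sg r False z \<noteq> sg r True (outer x))"
      unfolding z_def
      by (rule two_inv.walled_inv[OF T outer_VV[OF b1[folded n_def] b2[folded n_def] xn] Q P])
         (use sgP1 sgP2 sgmid n_def in auto)
    have of: "(fst y = False \<longrightarrow> P2 d2 (outer y) = outer y \<and> P1 d1 (outer y) \<noteq> outer y)
   \<and> (fst y = True \<longrightarrow> P1 d1 (outer y) = outer y \<and> P2 d2 (outer y) \<noteq> outer y)"
      using outer_fix[OF b1[folded n_def] b2[folded n_def] yp(1)] .
    show ?thesis using sig of y' yy False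
      by (cases x; cases y) (auto simp: sg_def outer_def)
  next
    case True
    note T = ti21[OF b1[folded n_def] b2[folded n_def]]
    have Q: "P1 d1 (outer x) = outer x" and P: "P2 d2 (outer x) \<noteq> outer x"
      using outer_fix[OF b1[folded n_def] b2[folded n_def] xn] True by auto
    define z where "z = two_inv.w (P2 d2) (P1 d1) (outer x) (two_inv.K (P2 d2) (P1 d1) (outer x))"
    have zV: "z \<in> VV n" unfolding z_def by (rule two_inv.wV[OF T outer_VV[OF b1[folded n_def] b2[folded n_def] xn]])
    have zf: "P1 d1 z = z \<or> P2 d2 z = z"
      using two_inv.y_fix[OF T outer_VV[OF b1[folded n_def] b2[folded n_def] xn] Q P] unfolding z_def by blast
    obtain y' where y': "y' \<in> pts n" "z = outer y'"
      using fix_outer[OF b1[folded n_def] b2[folded n_def] zV zf] by blast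
    have zr: "(outer x, z) \<in> stack_conn n d1 d2" unfolding z_def
      using two_inv.w_R[OF T outer_VV[OF b1[folded n_def] b2[folded n_def] xn] Q P]
        conn_eq[OF b1[folded n_def] b2[folded n_def]] R21[OF b1[folded n_def] b2[folded n_def]] by simp
    have zx: "z \<noteq> outer x" unfolding z_def by (rule two_inv.y_ne_x[OF T outer_VV[OF b1[folded n_def] b2[folded n_def] xn] Q P])
    have yy: "y' = y" using compose_unique[OF b1[folded n_def] b2[folded n_def] xn y'(1)] zx zr y' y_def by auto
    have sig: "(P1 d1 z = z \<longrightarrow> P2 d2 z \<noteq> z \<longrightarrow> sg r (\<not>True) z \<noteq> sg r (\<not>True) (outer x)) \<and>
        (P2 d2 z = z \<longrightarrow> P1 d1 z \<noteq> z \<longrightarrow> sg r (\<not>False) z \<noteq> sg r (\<not>True) (outer x))"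
      unfolding z_def
      by (rule two_inv.walled_inv[OF T outer_VV[OF b1[folded n_def] b2[folded n_def] xn] Q P, of "\<lambda>b. sg r (\<not>b)"])
         (use sgP1 sgP2 sgmid n_def in auto)
    have of: "(fst y = False \<longrightarrow> P2 d2 (outer y) = outer y \<and> P1 d1 (outer y) \<noteq> outer y)
   \<and> (fst y = True \<longrightarrow> P1 d1 (outer y) = outer y \<and> P2 d2 (outer y) \<noteq> outer y)"
      using outer_fix[OF b1[folded n_def] b2[folded n_def] yp(1)] .
    show ?thesis using sig of y' yy True
      by (cases x; cases y) (auto simp: sg_def outer_def)
  qed
  show "fst x \<noteq> fst (Defs.compose (r + s) d1 d2 x) \<longrightarrow>
          left_of_wall r x = left_of_wall r (Defs.compose (r + s) d1 d2 x)"
    using goal y_def n_def by (simp add: left_of_wall_def)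
  show "fst x = fst (Defs.compose (r + s) d1 d2 x) \<longrightarrow>
          left_of_wall r x = (\<not> left_of_wall r (Defs.compose (r + s) d1 d2 x))"
    using goal y_def n_def by (simp add: left_of_wall_def)
qed

end


abbreviation dcomp where "dcomp \<equiv> Defs.compose"

definition cons :: "nat \<Rightarrow> diagram \<Rightarrow> (pt \<Rightarrow> nat) \<Rightarrow> bool" where
  "cons n d L \<longleftrightarrow> (\<forall>x\<in>pts n. L (d x) = L x)"

definition lab :: "(nat \<Rightarrow> nat) \<Rightarrow> (nat \<Rightarrow> nat) \<Rightarrow> pt \<Rightarrow> nat" where
  "lab I J x = (if fst x then J (snd x) else I (snd x))"

definition T :: "nat \<Rightarrow> diagram \<Rightarrow> (nat \<Rightarrow> nat) \<Rightarrow> (nat \<Rightarrow> nat) \<Rightarrow> nat" where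
  "T n d I J = (if cons n d (lab I J) then 1 else 0)"

definition Lab :: "nat \<Rightarrow> nat \<Rightarrow> (nat \<Rightarrow> nat) set" where
  "Lab N n = PiE {..<n} (\<lambda>_. {..<N})"

definition bnd :: "nat \<Rightarrow> nat \<Rightarrow> (nat \<Rightarrow> nat) \<Rightarrow> bool" where
  "bnd N n I \<longleftrightarrow> (\<forall>k<n. I k < N)"

definition FF :: "(nat \<Rightarrow> nat) \<Rightarrow> (nat \<Rightarrow> nat) \<Rightarrow> (nat \<Rightarrow> nat) \<Rightarrow> nat \<times> nat \<Rightarrow> nat" where
  "FF I J K v = (if fst v = 0 then I (snd v) else if fst v = 1 then J (snd v) else K (snd v))"

lemma finite_Lab: "finite (Lab N n)"
  by (simp add: Lab_def finite_PiE)

lemma Lab_bnd: "J \<in> Lab N n \<Longrightarrow> bnd N n J"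
  by (auto simp: Lab_def bnd_def)

lemma FF_top: "FF I J K (lift_top x) = lab I J x"
  by (cases x) (auto simp: FF_def lift_top_def lab_def)

lemma FF_bot: "FF I J K (lift_bot x) = lab J K x"
  by (cases x) (auto simp: FF_def lift_bot_def lab_def)

lemma FF_outer: "FF I J K (outer x) = lab I K x"
  by (cases x) (auto simp: FF_def outer_def lab_def)

lemma edges_conn:
  assumes "\<forall>(u, v)\<in>E. f u = f v" "(u, v) \<in> E\<^sup>*"
  shows "f u = f v"
  using assms(2,1) by (induction rule: rtrancl_induct) auto

lemma sum_indicator_card:
  "finite A \<Longrightarrow> (\<Sum>x\<in>A. if P x then (1::nat) else 0) = card {x\<in>A. P x}"
  by (simp add: sum.inter_filter[symmetric])

context
  fixes n :: nat and d1 d2 :: diagram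
  assumes b1: "brauer_diagram n d1" and b2: "brauer_diagram n d2"
begin

lemma edge_cons: "T n d1 I J * T n d2 J K =
   (if (\<forall>(u, v)\<in>stack_edges n d1 d2. FF I J K u = FF I J K v) then 1 else 0)"
proof -
  have "(\<forall>(u, v)\<in>stack_edges n d1 d2. FF I J K u = FF I J K v) \<longleftrightarrow>
        cons n d1 (lab I J) \<and> cons n d2 (lab J K)"
  proof -
    have e: "(\<forall>(u, v)\<in>stack_edges n d1 d2. P u v) \<longleftrightarrow>
       (\<forall>x\<in>pts n. P (lift_top x) (lift_top (d1 x))) \<and> (\<forall>x\<in>pts n. P (lift_bot x) (lift_bot (d2 x)))" for P
      unfolding stack_edges_def by blast
    show ?thesis unfolding e cons_def FF_top FF_bot by (auto simp: eq_commute)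
  qed
  then show ?thesis by (simp add: T_def)
qed

lemma conn_VV: "(u, v) \<in> stack_conn n d1 d2 \<Longrightarrow> u \<in> VV n \<Longrightarrow> v \<in> VV n"
proof -
  assume "(u, v) \<in> stack_conn n d1 d2" "u \<in> VV n"
  then have "(u, v) \<in> (RR n d1 d2)\<^sup>*" by (simp add: conn_eq[OF b1 b2])
  then show "v \<in> VV n" using \<open>u \<in> VV n\<close>
    by (induction rule: rtrancl_induct)
       (auto simp: two_inv.R_def[OF ti12[OF b1 b2]] two_inv.PV[OF ti12[OF b1 b2]] two_inv.QV[OF ti12[OF b1 b2]])
qed

lemma conn_notVV: "(u, v) \<in> stack_conn n d1 d2 \<Longrightarrow> u \<notin> VV n \<Longrightarrow> v = u"
proof -
  assume "(u, v) \<in> stack_conn n d1 d2" "u \<notin> VV n"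
  then have "(u, v) \<in> (RR n d1 d2)\<^sup>*" by (simp add: conn_eq[OF b1 b2])
  then show "v = u" using \<open>u \<notin> VV n\<close>
    by (induction rule: converse_rtrancl_induct) (auto simp: two_inv.R_def[OF ti12[OF b1 b2]])
qed

lemma conn_refl: "(u, u) \<in> stack_conn n d1 d2"
  by (simp add: stack_conn_def)

lemma conn_trans: "(u, v) \<in> stack_conn n d1 d2 \<Longrightarrow> (v, w) \<in> stack_conn n d1 d2 \<Longrightarrow> (u, w) \<in> stack_conn n d1 d2"
  by (simp add: stack_conn_def)

lemma cls_eq: "(u, v) \<in> stack_conn n d1 d2 \<Longrightarrow> stack_conn n d1 d2 `` {u} = stack_conn n d1 d2 `` {v}"
  using conn_trans conn_sym[OF b1 b2] by blast

lemma hom: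
  assumes bI: "bnd N n I" and bK: "bnd N n K"
  shows "(\<Sum>J\<in>Lab N n. T n d1 I J * T n d2 J K) = N ^ loops n d1 d2 * T n (dcomp n d1 d2) I K"
proof -
  define C where "C = stack_conn n d1 d2"
  define cls where "cls v = C `` {v}" for v
  define Lp where "Lp = {cls (1, i) | i. i < n \<and> cls (1, i) \<subseteq> {1} \<times> UNIV}"
  have loops_eq: "loops n d1 d2 = card Lp"
    unfolding loops_def Lp_def cls_def C_def by simp
  define Good where "Good = {J \<in> Lab N n. \<forall>(u, v)\<in>C. FF I J K u = FF I J K v}"
  have edges_sub: "stack_edges n d1 d2 \<subseteq> C" unfolding C_def stack_conn_def by auto
  have sumeq: "(\<Sum>J\<in>Lab N n. T n d1 I J * T n d2 J K) = card Good"
  proof -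
    have "(\<Sum>J\<in>Lab N n. T n d1 I J * T n d2 J K) =
      card {J \<in> Lab N n. \<forall>(u, v)\<in>stack_edges n d1 d2. FF I J K u = FF I J K v}"
      by (simp add: edge_cons sum_indicator_card[OF finite_Lab])
    also have "{J \<in> Lab N n. \<forall>(u, v)\<in>stack_edges n d1 d2. FF I J K u = FF I J K v} = Good"
    proof -
      have "(\<forall>(u, v)\<in>stack_edges n d1 d2. FF I J K u = FF I J K v) \<longleftrightarrow>
            (\<forall>(u, v)\<in>C. FF I J K u = FF I J K v)" for J
      proof
        assume h: "\<forall>(u, v)\<in>stack_edges n d1 d2. FF I J K u = FF I J K v"
        show "\<forall>(u, v)\<in>C. FF I J K u = FF I J K v"
          using edges_conn[OF h] unfolding C_def stack_conn_def by blast
      next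
        assume "\<forall>(u, v)\<in>C. FF I J K u = FF I J K v"
        then show "\<forall>(u, v)\<in>stack_edges n d1 d2. FF I J K u = FF I J K v" using edges_sub by blast
      qed
      then show ?thesis unfolding Good_def by simp
    qed
    finally show ?thesis .
  qed
  show ?thesis
  proof (cases "cons n (dcomp n d1 d2) (lab I K)")
    case False
    then obtain x where x: "x \<in> pts n" "lab I K (dcomp n d1 d2 x) \<noteq> lab I K x"
      unfolding cons_def by blast
    have c: "(outer x, outer (dcomp n d1 d2 x)) \<in> C"
      using compose_prop[OF b1 b2 x(1)] C_def by simp
    have "Good = {}"
    proof (rule ccontr)
      assume "Good \<noteq> {}"
      then obtain J where "\<forall>(u, v)\<in>C. FF I J K u = FF I J K v" unfolding Good_def by blast
      then have "FF I J K (outer x) = FF I J K (outer (dcomp n d1 d2 x))" using c by blast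
      then show False using x(2) by (simp add: FF_outer)
    qed
    then show ?thesis using sumeq False by (simp add: T_def)
  next
    case True
    have F1: "i < n \<Longrightarrow> (1, i) \<in> VV n" for i by (simp add: VV_def)
    have CVV: "(u, v) \<in> C \<Longrightarrow> u \<in> VV n \<Longrightarrow> v \<in> VV n" for u v using conn_VV C_def by simp
    have Cself: "v \<in> cls v" for v using conn_refl unfolding cls_def C_def by simp
    have clsq: "(u, v) \<in> C \<Longrightarrow> cls u = cls v" for u v using cls_eq unfolding cls_def C_def by simp
    have F3: "\<exists>y\<in>pts n. outer y \<in> cls (1, i)" if i: "i < n" "cls (1, i) \<notin> Lp" for i
    proof -
      have "\<not> cls (1, i) \<subseteq> {1} \<times> UNIV" using i unfolding Lp_def by blast
      then have "\<exists>w\<in>cls (1, i). fst w \<noteq> 1" by (auto simp: subset_iff mem_Times_iff) force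
      then obtain w where w: "w \<in> cls (1, i)" "fst w \<noteq> 1" by blast
      have wV: "w \<in> VV n" using CVV[OF _ F1[OF i(1)]] w(1) unfolding cls_def by blast
      obtain l k where lk: "w = (l, k)" by (cases w)
      have "w = outer (l = 2, k)" "(l = 2, k) \<in> pts n" using wV lk w(2)
        by (auto simp: VV_def outer_def pts_iff)
      then show ?thesis using w(1) by metis
    qed
    have F4: "lab I K y1 = lab I K y2" if y: "y1 \<in> pts n" "y2 \<in> pts n" "(outer y1, outer y2) \<in> C" for y1 y2
    proof (cases "y2 = y1")
      case True then show ?thesis by simp
    next
      case False
      then have "dcomp n d1 d2 y1 = y2" using compose_unique[OF b1 b2 y(1) y(2)] y(3) C_def by simp
      then show ?thesis using True y(1) unfolding cons_def by metis
    qed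
    have finLp: "finite Lp"
    proof -
      have "Lp \<subseteq> (\<lambda>i. cls (1, i)) ` {..<n}" unfolding Lp_def by auto
      then show ?thesis by (rule finite_subset) simp
    qed
    define \<Phi> where "\<Phi> J = restrict (\<lambda>Cl. J (snd (SOME v. v \<in> Cl))) Lp" for J :: "nat \<Rightarrow> nat"
    define val where "val g Cl = (if Cl \<in> Lp then g Cl else lab I K (SOME y. y \<in> pts n \<and> outer y \<in> Cl))"
      for g :: "(nat \<times> nat) set \<Rightarrow> nat" and Cl
    define \<Psi> where "\<Psi> g = restrict (\<lambda>i. val g (cls (1, i))) {..<n}" for g
    have LpE: "\<exists>i<n. Cl = cls (1, i) \<and> Cl \<subseteq> {1} \<times> UNIV" if "Cl \<in> Lp" for Cl
      using that unfolding Lp_def by blast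
    have some_in: "(SOME v. v \<in> Cl) \<in> Cl \<and> (SOME v. v \<in> Cl) = (1, snd (SOME v. v \<in> Cl))
        \<and> snd (SOME v. v \<in> Cl) < n \<and> cls (1, snd (SOME v. v \<in> Cl)) = Cl" if ClLp: "Cl \<in> Lp" for Cl
    proof -
      obtain i where i: "i < n" "Cl = cls (1, i)" "Cl \<subseteq> {1} \<times> UNIV" using LpE[OF ClLp] by blast
      have ne: "(SOME v. v \<in> Cl) \<in> Cl" using Cself[of "(1,i)"] i by (metis someI_ex)
      then have v1: "(SOME v. v \<in> Cl) = (1, snd (SOME v. v \<in> Cl))" using i(3) by (cases "SOME v. v \<in> Cl") auto
      have vV: "(SOME v. v \<in> Cl) \<in> VV n" using CVV[OF _ F1[OF i(1)]] ne i(2) unfolding cls_def by blast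
      have "cls (1, i) = cls (SOME v. v \<in> Cl)" using ne i(2) clsq unfolding cls_def by blast
      then show ?thesis using ne v1 vV i(2) by (auto simp: VV_def)
    qed
    have inj: "inj_on \<Phi> Good"
    proof (rule inj_onI)
      fix J J' assume J: "J \<in> Good" and J': "J' \<in> Good" and eq: "\<Phi> J = \<Phi> J'"
      have JL: "J \<in> Lab N n" "J' \<in> Lab N n" using J J' unfolding Good_def by auto
      have Jc: "\<forall>(u, v)\<in>C. FF I J K u = FF I J K v" "\<forall>(u, v)\<in>C. FF I J' K u = FF I J' K v"
        using J J' unfolding Good_def by auto
      show "J = J'"
      proof
        fix i
        show "J i = J' i"
        proof (cases "i < n")
          case False
          then show ?thesis using JL unfolding Lab_def PiE_def extensional_def by auto
        next
          case True
          show ?thesis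
          proof (cases "cls (1, i) \<in> Lp")
            case inLp: True
            define v where "v = (SOME v. v \<in> cls (1, i))"
            have v: "v \<in> cls (1, i)" "v = (1, snd v)" using some_in[OF inLp] v_def by auto
            have "((1, i), v) \<in> C" using v(1) unfolding cls_def by simp
            then have "FF I J K (1, i) = FF I J K v" "FF I J' K (1, i) = FF I J' K v" using Jc by auto
            then have "J i = J (snd v)" "J' i = J' (snd v)" using v(2) by (metis FF_def fst_conv snd_conv one_neq_zero)+
            moreover have "\<Phi> J (cls (1, i)) = J (snd v)" "\<Phi> J' (cls (1, i)) = J' (snd v)"
              using inLp v_def unfolding \<Phi>_def by auto
            ultimately show ?thesis using eq by simp
          next
            case False
            obtain y where y: "y \<in> pts n" "outer y \<in> cls (1, i)" using F3[OF True False] by blast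
            have "((1, i), outer y) \<in> C" using y(2) unfolding cls_def by simp
            then have "FF I J K (1, i) = lab I K y" "FF I J' K (1, i) = lab I K y"
              using Jc by (auto simp: FF_outer)
            then show ?thesis by (simp add: FF_def)
          qed
        qed
      qed
    qed
    have img: "\<Phi> ` Good = PiE Lp (\<lambda>_. {..<N})"
    proof
      show "\<Phi> ` Good \<subseteq> PiE Lp (\<lambda>_. {..<N})"
      proof
        fix g assume "g \<in> \<Phi> ` Good"
        then obtain J where J: "J \<in> Good" "g = \<Phi> J" by blast
        have "J \<in> Lab N n" using J unfolding Good_def by simp
        then have "\<forall>k<n. J k < N" unfolding Lab_def by auto
        then show "g \<in> PiE Lp (\<lambda>_. {..<N})" using J some_in unfolding \<Phi>_def by auto
      qed
    next
      show "PiE Lp (\<lambda>_. {..<N}) \<subseteq> \<Phi> ` Good"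
      proof
        fix g assume g: "g \<in> PiE Lp (\<lambda>_. {..<N})"
        define J where "J = \<Psi> g"
        have some_y: "(SOME y. y \<in> pts n \<and> outer y \<in> Cl) \<in> pts n \<and> outer (SOME y. y \<in> pts n \<and> outer y \<in> Cl) \<in> Cl"
          if "\<exists>y. y \<in> pts n \<and> outer y \<in> Cl" for Cl using someI_ex[OF that] .
        have JL: "J \<in> Lab N n"
          unfolding Lab_def J_def \<Psi>_def
        proof (rule restrict_PiE_iff[THEN iffD2], intro ballI)
          fix i assume i: "i \<in> {..<n}"
          show "val g (cls (1, i)) \<in> {..<N}"
          proof (cases "cls (1, i) \<in> Lp")
            case True then show ?thesis using g unfolding val_def by auto
          next
            case False
            have "\<exists>y. y \<in> pts n \<and> outer y \<in> cls (1, i)" using F3[OF _ False] i by auto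
            then have "(SOME y. y \<in> pts n \<and> outer y \<in> cls (1, i)) \<in> pts n" using some_y by blast
            then show ?thesis using False bI bK unfolding val_def lab_def bnd_def by (auto simp: pts_iff)
          qed
        qed
        have Fval: "FF I J K u = val g (cls u)" if u: "u \<in> VV n" for u
        proof (cases "fst u = 1")
          case True
          obtain i where ui: "u = (1, i)" "i < n" using u True by (cases u) (auto simp: VV_def)
          then show ?thesis by (simp add: FF_def J_def \<Psi>_def)
        next
          case False
          obtain l k where lk: "u = (l, k)" by (cases u)
          define y0 where "y0 = (l = 2, k)"
          have y0: "u = outer y0" "y0 \<in> pts n" using u lk False by (auto simp: VV_def outer_def pts_iff y0_def)
          have nLp: "cls u \<notin> Lp"
          proof
            assume "cls u \<in> Lp"
            then have "cls u \<subseteq> {1} \<times> UNIV" using LpE by blast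
            then show False using Cself[of u] False by auto
          qed
          have ex: "\<exists>y. y \<in> pts n \<and> outer y \<in> cls u" using y0 Cself by metis
          define y1 where "y1 = (SOME y. y \<in> pts n \<and> outer y \<in> cls u)"
          have y1: "y1 \<in> pts n" "outer y1 \<in> cls u" using some_y[OF ex] y1_def by auto
          have "lab I K y0 = lab I K y1" using F4[OF y0(2) y1(1)] y1(2) y0(1) unfolding cls_def by simp
          then show ?thesis using nLp y0 y1_def by (simp add: val_def FF_outer)
        qed
        have Jc: "\<forall>(u, v)\<in>C. FF I J K u = FF I J K v"
        proof (intro ballI, clarify)
          fix u v assume uv: "(u, v) \<in> C"
          show "FF I J K u = FF I J K v"
          proof (cases "u \<in> VV n")
            case True
            then show ?thesis using Fval CVV[OF uv True] clsq[OF uv] by simp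
          next
            case False
            then show ?thesis using conn_notVV[of u v] uv C_def by simp
          qed
        qed
        have JG: "J \<in> Good" using JL Jc unfolding Good_def by simp
        have "\<Phi> J = g"
        proof
          fix Cl
          show "\<Phi> J Cl = g Cl"
          proof (cases "Cl \<in> Lp")
            case True
            note si = some_in[OF True]
            have "\<Phi> J Cl = J (snd (SOME v. v \<in> Cl))" using True unfolding \<Phi>_def by simp
            also have "\<dots> = val g (cls (1, snd (SOME v. v \<in> Cl)))" using si unfolding J_def \<Psi>_def by simp
            also have "\<dots> = g Cl"
            proof -
              have e: "cls (1, snd (SOME v. v \<in> Cl)) = Cl" using si by blast
              show ?thesis unfolding e using True by (simp add: val_def)
            qed
            finally show ?thesis .
          next
            case False
            then show ?thesis using g unfolding \<Phi>_def PiE_def extensional_def by auto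
          qed
        qed
        then show "g \<in> \<Phi> ` Good" using JG by blast
      qed
    qed
    have "card Good = card (PiE Lp (\<lambda>_. {..<N}))"
      using bij_betw_same_card[of \<Phi> Good] inj img unfolding bij_betw_def by blast
    also have "\<dots> = N ^ card Lp" using card_PiE[OF finLp, of "\<lambda>_. {..<N}"] by simp
    finally show ?thesis using sumeq loops_eq True by (simp add: T_def)
  qed
qed

end


definition code :: "nat \<Rightarrow> pt \<Rightarrow> nat" where
  "code n x = (if fst x then n + snd x else snd x)"

definition lam :: "nat \<Rightarrow> diagram \<Rightarrow> pt \<Rightarrow> nat" where
  "lam n d x = min (code n x) (code n (d x))"

definition lamI :: "nat \<Rightarrow> diagram \<Rightarrow> nat \<Rightarrow> nat" where
  "lamI n d = restrict (\<lambda>k. lam n d (False, k)) {..<n}"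

definition lamJ :: "nat \<Rightarrow> diagram \<Rightarrow> nat \<Rightarrow> nat" where
  "lamJ n d = restrict (\<lambda>k. lam n d (True, k)) {..<n}"

lemma code_inj: "x \<in> pts n \<Longrightarrow> y \<in> pts n \<Longrightarrow> code n x = code n y \<Longrightarrow> x = y"
  by (cases x; cases y) (auto simp: code_def pts_iff split: if_splits)

lemma code_lt: "x \<in> pts n \<Longrightarrow> code n x < 2 * n"
  by (cases x) (auto simp: code_def pts_iff)

lemma lab_lam: "x \<in> pts n \<Longrightarrow> lab (lamI n d) (lamJ n d) x = lam n d x"
  by (cases x) (auto simp: lab_def lamI_def lamJ_def pts_iff)

context
  fixes n :: nat and d :: diagram
  assumes bd: "brauer_diagram n d"
begin

lemma lam_Lab: "2 * n \<le> N \<Longrightarrow> lamI n d \<in> Lab N n \<and> lamJ n d \<in> Lab N n"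
proof -
  assume N: "2 * n \<le> N"
  have "lam n d x < N" if "x \<in> pts n" for x
    using code_lt[OF that] N unfolding lam_def by (simp add: min_def)
  then show ?thesis unfolding Lab_def lamI_def lamJ_def by (auto simp: pts_iff)
qed

lemma lam_cons: "cons n d (lab (lamI n d) (lamJ n d))"
  unfolding cons_def
proof
  fix x assume x: "x \<in> pts n"
  have dx: "d x \<in> pts n" "d (d x) = x" using bd x by (auto simp: brauer_diagram_def)
  show "lab (lamI n d) (lamJ n d) (d x) = lab (lamI n d) (lamJ n d) x"
    using lab_lam[OF x] lab_lam[OF dx(1)] dx(2) by (simp add: lam_def min.commute)
qed

lemma lam_cons_unique:
  assumes bd': "brauer_diagram n d'" and c: "cons n d' (lab (lamI n d) (lamJ n d))"
  shows "d' = d"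
proof
  fix x
  show "d' x = d x"
  proof (cases "x \<in> pts n")
    case False
    have "d x = x" "d' x = x" using bd bd' False unfolding brauer_diagram_def by blast+
    then show ?thesis by simp
  next
    case True
    have y: "d' x \<in> pts n" "d' x \<noteq> x" using bd' True by (auto simp: brauer_diagram_def)
    have dx: "d x \<in> pts n" "d (d x) = x" using bd True by (auto simp: brauer_diagram_def)
    have dy: "d (d' x) \<in> pts n" using bd y by (auto simp: brauer_diagram_def)
    have "lam n d (d' x) = lam n d x" using c True lab_lam[OF True] lab_lam[OF y(1)] unfolding cons_def by metis
    then have "code n (d' x) = code n x \<or> code n (d' x) = code n (d x) \<or>
               code n (d (d' x)) = code n x \<or> code n (d (d' x)) = code n (d x)"
      unfolding lam_def by (simp add: min_def split: if_splits)
    then have "d' x = x \<or> d' x = d x \<or> d (d' x) = x \<or> d (d' x) = d x"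
      using code_inj y(1) True dx(1) dy by blast
    moreover have "d (d' x) = x \<Longrightarrow> d' x = d x" using bd y(1) by (metis brauer_diagram_def)
    moreover have "d (d' x) = d x \<Longrightarrow> d' x = x" using bd y(1) True by (metis brauer_diagram_def)
    ultimately show ?thesis using y(2) by blast
  qed
qed

end

lemma faithful:
  assumes bd: "brauer_diagram n d" and bd': "brauer_diagram n d'" and N: "2 * n \<le> N" "2 \<le> N"
    and eq: "\<And>I K. I \<in> Lab N n \<Longrightarrow> K \<in> Lab N n \<Longrightarrow> N ^ c * T n d I K = N ^ c' * T n d' I K"
  shows "d' = d \<and> c = c'"
proof -
  have L: "lamI n d \<in> Lab N n" "lamJ n d \<in> Lab N n" using lam_Lab[OF bd N(1)] by auto
  have "N ^ c * T n d (lamI n d) (lamJ n d) = N ^ c' * T n d' (lamI n d) (lamJ n d)" using eq L by blast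
  then have e: "N ^ c = N ^ c' * T n d' (lamI n d) (lamJ n d)" using lam_cons[OF bd] by (simp add: T_def)
  moreover have "N ^ c \<noteq> 0" using N by simp
  ultimately have "T n d' (lamI n d) (lamJ n d) \<noteq> 0" by auto
  then have c: "cons n d' (lab (lamI n d) (lamJ n d))" by (simp add: T_def split: if_splits)
  then have "T n d' (lamI n d) (lamJ n d) = 1" by (simp add: T_def)
  then have "N ^ c = N ^ c'" using e by simp
  then have "c = c'" using N(2) by (simp add: power_inject_exp)
  then show ?thesis using lam_cons_unique[OF bd bd' c] by simp
qed

definition mm :: "nat \<Rightarrow> nat \<Rightarrow> ((nat \<Rightarrow> nat) \<Rightarrow> (nat \<Rightarrow> nat) \<Rightarrow> nat) \<Rightarrow> ((nat \<Rightarrow> nat) \<Rightarrow> (nat \<Rightarrow> nat) \<Rightarrow> nat)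
   \<Rightarrow> (nat \<Rightarrow> nat) \<Rightarrow> (nat \<Rightarrow> nat) \<Rightarrow> nat" where
  "mm N n A B I K = (\<Sum>J\<in>Lab N n. A I J * B J K)"

lemma assoc_diag:
  assumes b1: "brauer_diagram n d1" and b2: "brauer_diagram n d2" and b3: "brauer_diagram n d3"
  shows "dcomp n (dcomp n d1 d2) d3 = dcomp n d1 (dcomp n d2 d3) \<and>
         loops n d1 d2 + loops n (dcomp n d1 d2) d3 = loops n d2 d3 + loops n d1 (dcomp n d2 d3)"
proof -
  define N where "N = 2 * n + 2"
  have N: "2 * n \<le> N" "2 \<le> N" unfolding N_def by auto
  have b12: "brauer_diagram n (dcomp n d1 d2)" by (rule brauer_compose[OF b1 b2])
  have b23: "brauer_diagram n (dcomp n d2 d3)" by (rule brauer_compose[OF b2 b3])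
  have bL: "brauer_diagram n (dcomp n (dcomp n d1 d2) d3)" by (rule brauer_compose[OF b12 b3])
  have bR: "brauer_diagram n (dcomp n d1 (dcomp n d2 d3))" by (rule brauer_compose[OF b1 b23])
  have eq: "N ^ (loops n d1 d2 + loops n (dcomp n d1 d2) d3) * T n (dcomp n (dcomp n d1 d2) d3) I K =
            N ^ (loops n d2 d3 + loops n d1 (dcomp n d2 d3)) * T n (dcomp n d1 (dcomp n d2 d3)) I K"
    if I: "I \<in> Lab N n" and K: "K \<in> Lab N n" for I K
  proof -
    have "(\<Sum>J\<in>Lab N n. (\<Sum>J'\<in>Lab N n. T n d1 I J' * T n d2 J' J) * T n d3 J K) =
          (\<Sum>J'\<in>Lab N n. T n d1 I J' * (\<Sum>J\<in>Lab N n. T n d2 J' J * T n d3 J K))"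
      by (simp add: sum_distrib_left sum_distrib_right mult.assoc) (rule sum.swap)
    moreover have "(\<Sum>J\<in>Lab N n. (\<Sum>J'\<in>Lab N n. T n d1 I J' * T n d2 J' J) * T n d3 J K) =
       N ^ (loops n d1 d2 + loops n (dcomp n d1 d2) d3) * T n (dcomp n (dcomp n d1 d2) d3) I K"
    proof -
      have "(\<Sum>J\<in>Lab N n. (\<Sum>J'\<in>Lab N n. T n d1 I J' * T n d2 J' J) * T n d3 J K) =
            (\<Sum>J\<in>Lab N n. N ^ loops n d1 d2 * T n (dcomp n d1 d2) I J * T n d3 J K)"
        using hom[OF b1 b2 Lab_bnd[OF I] Lab_bnd] by simp
      also have "\<dots> = N ^ loops n d1 d2 * (\<Sum>J\<in>Lab N n. T n (dcomp n d1 d2) I J * T n d3 J K)"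
        by (simp add: sum_distrib_left mult.assoc)
      also have "\<dots> = N ^ loops n d1 d2 * (N ^ loops n (dcomp n d1 d2) d3 * T n (dcomp n (dcomp n d1 d2) d3) I K)"
        using hom[OF b12 b3 Lab_bnd[OF I] Lab_bnd[OF K]] by simp
      finally show ?thesis by (simp add: power_add mult.assoc)
    qed
    moreover have "(\<Sum>J'\<in>Lab N n. T n d1 I J' * (\<Sum>J\<in>Lab N n. T n d2 J' J * T n d3 J K)) =
       N ^ (loops n d2 d3 + loops n d1 (dcomp n d2 d3)) * T n (dcomp n d1 (dcomp n d2 d3)) I K"
    proof -
      have "(\<Sum>J'\<in>Lab N n. T n d1 I J' * (\<Sum>J\<in>Lab N n. T n d2 J' J * T n d3 J K)) =
            (\<Sum>J'\<in>Lab N n. T n d1 I J' * (N ^ loops n d2 d3 * T n (dcomp n d2 d3) J' K))"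
        using hom[OF b2 b3 Lab_bnd Lab_bnd[OF K]] by simp
      also have "\<dots> = N ^ loops n d2 d3 * (\<Sum>J'\<in>Lab N n. T n d1 I J' * T n (dcomp n d2 d3) J' K)"
        by (simp add: sum_distrib_left mult.assoc mult.left_commute)
      also have "\<dots> = N ^ loops n d2 d3 * (N ^ loops n d1 (dcomp n d2 d3) * T n (dcomp n d1 (dcomp n d2 d3)) I K)"
        using hom[OF b1 b23 Lab_bnd[OF I] Lab_bnd[OF K]] by simp
      finally show ?thesis by (simp add: power_add mult.assoc)
    qed
    ultimately show ?thesis by simp
  qed
  show ?thesis using faithful[OF bL bR N eq] by simp
qed

definition idd :: "nat \<Rightarrow> diagram" where
  "idd n x = (if x \<in> pts n then (\<not> fst x, snd x) else x)"

lemma idd_brauer: "brauer_diagram n (idd n)"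
  by (auto simp: brauer_diagram_def idd_def pts_iff)

lemma idd_walled: "walled_diagram r s (idd (r + s))"
  by (auto simp: walled_diagram_def idd_brauer idd_def left_of_wall_def)

lemma T_idd: "T n (idd n) I J = (if (\<forall>k<n. I k = J k) then 1 else 0)"
proof -
  have "cons n (idd n) (lab I J) \<longleftrightarrow> (\<forall>k<n. I k = J k)"
  proof
    assume h: "cons n (idd n) (lab I J)"
    show "\<forall>k<n. I k = J k"
    proof (intro allI impI)
      fix k assume k: "k < n"
      have "(False, k) \<in> pts n" using k by (simp add: pts_iff)
      then show "I k = J k" using h unfolding cons_def idd_def lab_def by fastforce
    qed
  next
    assume "\<forall>k<n. I k = J k"
    then show "cons n (idd n) (lab I J)" unfolding cons_def idd_def lab_def by (auto simp: pts_iff)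
  qed
  then show ?thesis by (simp add: T_def)
qed

lemma T_restrict1:
  assumes bd: "brauer_diagram n d"
  shows "T n d (restrict I {..<n}) K = T n d I K"
proof -
  have l: "lab (restrict I {..<n}) K x = lab I K x" if "x \<in> pts n" for x
    using that by (auto simp: lab_def pts_iff)
  have "cons n d (lab (restrict I {..<n}) K) = cons n d (lab I K)"
    unfolding cons_def using l bd by (auto simp: brauer_diagram_def)
  then show ?thesis by (simp add: T_def)
qed

lemma T_restrict2:
  assumes bd: "brauer_diagram n d"
  shows "T n d I (restrict K {..<n}) = T n d I K"
proof -
  have l: "lab I (restrict K {..<n}) x = lab I K x" if "x \<in> pts n" for x
    using that by (auto simp: lab_def pts_iff)
  have "cons n d (lab I (restrict K {..<n})) = cons n d (lab I K)"
    unfolding cons_def using l bd by (auto simp: brauer_diagram_def)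
  then show ?thesis by (simp add: T_def)
qed

lemma Lab_restrict: "I \<in> Lab N n \<Longrightarrow> J \<in> Lab N n \<Longrightarrow> (\<forall>k<n. I k = J k) \<longleftrightarrow> J = I"
  unfolding Lab_def by (auto simp: PiE_def extensional_def fun_eq_iff) (metis not_less)

lemma id_left:
  assumes bd: "brauer_diagram n d"
  shows "dcomp n (idd n) d = d \<and> loops n (idd n) d = 0"
proof -
  define N where "N = 2 * n + 2"
  have N: "2 * n \<le> N" "2 \<le> N" unfolding N_def by auto
  have bc: "brauer_diagram n (dcomp n (idd n) d)" by (rule brauer_compose[OF idd_brauer bd])
  have eq: "N ^ 0 * T n d I K = N ^ loops n (idd n) d * T n (dcomp n (idd n) d) I K"
    if I: "I \<in> Lab N n" and K: "K \<in> Lab N n" for I K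
  proof -
    have "(\<Sum>J\<in>Lab N n. T n (idd n) I J * T n d J K) = (\<Sum>J\<in>Lab N n. if I = J then T n d J K else 0)"
    proof (rule sum.cong)
      fix J assume J: "J \<in> Lab N n"
      show "T n (idd n) I J * T n d J K = (if I = J then T n d J K else 0)"
        using Lab_restrict[OF I J] by (auto simp: T_idd)
    qed simp
    also have "\<dots> = T n d I K" using I by (simp add: finite_Lab)
    finally show ?thesis using hom[OF idd_brauer bd Lab_bnd[OF I] Lab_bnd[OF K]] by simp
  qed
  show ?thesis using faithful[OF bd bc N eq] by simp
qed

lemma id_right:
  assumes bd: "brauer_diagram n d"
  shows "dcomp n d (idd n) = d \<and> loops n d (idd n) = 0"
proof -
  define N where "N = 2 * n + 2"
  have N: "2 * n \<le> N" "2 \<le> N" unfolding N_def by auto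
  have bc: "brauer_diagram n (dcomp n d (idd n))" by (rule brauer_compose[OF bd idd_brauer])
  have eq: "N ^ 0 * T n d I K = N ^ loops n d (idd n) * T n (dcomp n d (idd n)) I K"
    if I: "I \<in> Lab N n" and K: "K \<in> Lab N n" for I K
  proof -
    have "(\<Sum>J\<in>Lab N n. T n d I J * T n (idd n) J K) = (\<Sum>J\<in>Lab N n. if K = J then T n d I J else 0)"
    proof (rule sum.cong)
      fix J assume J: "J \<in> Lab N n"
      have "(\<forall>k<n. J k = K k) \<longleftrightarrow> K = J" using Lab_restrict[OF J K] by (auto simp: eq_commute)
      then show "T n d I J * T n (idd n) J K = (if K = J then T n d I J else 0)"
        by (auto simp: T_idd)
    qed simp
    also have "\<dots> = T n d I K" using K by (simp add: finite_Lab)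
    finally show ?thesis using hom[OF bd idd_brauer Lab_bnd[OF I] Lab_bnd[OF K]] by simp
  qed
  show ?thesis using faithful[OF bd bc N eq] by simp
qed


locale emb =
  fixes r s :: nat and \<alpha> \<beta> ai bi :: "nat \<Rightarrow> nat" and c k0 :: nat
  assumes k0n: "k0 < r + s" and cm: "c < Suc r + Suc s"
    and \<alpha>1: "\<And>k. k < r + s \<Longrightarrow> \<alpha> k < Suc r + Suc s \<and> \<alpha> k \<noteq> c \<and> \<alpha> k \<noteq> \<beta> k0 \<and> ai (\<alpha> k) = k"
    and \<alpha>2: "\<And>j. j < Suc r + Suc s \<Longrightarrow> j \<noteq> c \<Longrightarrow> j \<noteq> \<beta> k0 \<Longrightarrow> ai j < r + s \<and> \<alpha> (ai j) = j"
    and \<beta>1: "\<And>k. k < r + s \<Longrightarrow> \<beta> k < Suc r + Suc s \<and> \<beta> k \<noteq> c \<and> \<beta> k \<noteq> \<alpha> k0 \<and> bi (\<beta> k) = k"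
    and \<beta>2: "\<And>j. j < Suc r + Suc s \<Longrightarrow> j \<noteq> c \<Longrightarrow> j \<noteq> \<alpha> k0 \<Longrightarrow> bi j < r + s \<and> \<beta> (bi j) = j"
    and mid: "\<And>k. k < r + s \<Longrightarrow> k \<noteq> k0 \<Longrightarrow> \<alpha> k = \<beta> k"
    and s\<alpha>: "\<And>k. k < r + s \<Longrightarrow> (\<alpha> k < Suc r \<longleftrightarrow> k < r)"
    and s\<beta>: "\<And>k. k < r + s \<Longrightarrow> (\<beta> k < Suc r \<longleftrightarrow> k < r)"
    and sc1: "(c < Suc r) \<noteq> (\<beta> k0 < Suc r)"
    and sc2: "(c < Suc r) \<noteq> (\<alpha> k0 < Suc r)"
begin

abbreviation "nB \<equiv> r + s"
abbreviation "nA \<equiv> Suc r + Suc s"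

definition em :: "pt \<Rightarrow> pt" where
  "em x = (fst x, if fst x then \<beta> (snd x) else \<alpha> (snd x))"

definition unem :: "pt \<Rightarrow> pt" where
  "unem X = (fst X, if fst X then bi (snd X) else ai (snd X))"

definition cc :: "pt set" where
  "cc = {(False, c), (False, \<beta> k0), (True, c), (True, \<alpha> k0)}"

definition kap :: "diagram \<Rightarrow> diagram" where
  "kap d X = (if X \<in> pts nA then
      (if X = (False, c) then (False, \<beta> k0)
       else if X = (False, \<beta> k0) then (False, c)
       else if X = (True, c) then (True, \<alpha> k0)
       else if X = (True, \<alpha> k0) then (True, c)
       else em (d (unem X)))
     else X)"

lemma bk0: "\<beta> k0 < nA" "\<beta> k0 \<noteq> c" "\<alpha> k0 < nA" "\<alpha> k0 \<noteq> c" "\<alpha> k0 \<noteq> \<beta> k0"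
  using \<beta>1[OF k0n] \<alpha>1[OF k0n] by auto

lemma \<alpha>lt: "k < nB \<Longrightarrow> \<alpha> k < Suc (Suc (r + s))" and \<beta>lt: "k < nB \<Longrightarrow> \<beta> k < Suc (Suc (r + s))"
  using \<alpha>1 \<beta>1 by auto

lemma em_pts: "x \<in> pts nB \<Longrightarrow> em x \<in> pts nA \<and> em x \<notin> cc \<and> unem (em x) = x"
  by (cases x) (auto simp: em_def unem_def cc_def pts_iff \<alpha>1 \<beta>1 \<alpha>lt \<beta>lt)

lemma unem_pts: "X \<in> pts nA \<Longrightarrow> X \<notin> cc \<Longrightarrow> unem X \<in> pts nB \<and> em (unem X) = X"
  by (cases X) (auto simp: em_def unem_def cc_def pts_iff \<alpha>2 \<beta>2)

lemma em_fst: "fst (em x) = fst x"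
  by (simp add: em_def)

lemma em_side: "x \<in> pts nB \<Longrightarrow> (snd (em x) < Suc r \<longleftrightarrow> snd x < r)"
  by (cases x) (auto simp: em_def pts_iff s\<alpha> s\<beta>)

lemma cc_pts: "X \<in> cc \<Longrightarrow> X \<in> pts nA"
  using cm bk0 by (auto simp: cc_def pts_iff)

lemma kap_em: "x \<in> pts nB \<Longrightarrow> kap d (em x) = em (d x)"
  using em_pts[of x] by (auto simp: kap_def cc_def)

lemma kap_cc: "kap d (False, c) = (False, \<beta> k0)" "kap d (False, \<beta> k0) = (False, c)"
   "kap d (True, c) = (True, \<alpha> k0)" "kap d (True, \<alpha> k0) = (True, c)"
  using cc_pts bk0 by (auto simp: kap_def cc_def)

lemma kap_out: "X \<notin> pts nA \<Longrightarrow> kap d X = X"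
  by (simp add: kap_def)

lemma kap_brauer:
  assumes bd: "brauer_diagram nB d"
  shows "brauer_diagram nA (kap d)"
proof -
  have "kap d X \<in> pts nA \<and> kap d X \<noteq> X \<and> kap d (kap d X) = X" if X: "X \<in> pts nA" for X
  proof (cases "X \<in> cc")
    case True
    then show ?thesis using kap_cc bk0 cc_pts by (auto simp: cc_def)
  next
    case False
    obtain x where x: "x \<in> pts nB" "X = em x" using unem_pts[OF X False] by metis
    have dx: "d x \<in> pts nB" "d x \<noteq> x" "d (d x) = x" using bd x(1) by (auto simp: brauer_diagram_def)
    show ?thesis using x dx kap_em em_pts by metis
  qed
  then show ?thesis unfolding brauer_diagram_def using kap_out by blast
qed

lemma kap_walled:
  assumes wd: "walled_diagram r s d"
  shows "walled_diagram (Suc r) (Suc s) (kap d)"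
proof -
  have bd: "brauer_diagram nB d" using wd by (simp add: walled_diagram_def)
  have "(fst X \<noteq> fst (kap d X) \<longrightarrow> left_of_wall (Suc r) X = left_of_wall (Suc r) (kap d X)) \<and>
          (fst X = fst (kap d X) \<longrightarrow> left_of_wall (Suc r) X = (\<not> left_of_wall (Suc r) (kap d X)))"
    if X: "X \<in> pts (Suc r + Suc s)" for X
  proof -
    have "(fst X \<noteq> fst (kap d X) \<longrightarrow> (snd X < Suc r \<longleftrightarrow> snd (kap d X) < Suc r)) \<and>
          (fst X = fst (kap d X) \<longrightarrow> (snd X < Suc r \<longleftrightarrow> \<not> snd (kap d X) < Suc r))"
    proof (cases "X \<in> cc")
      case True
      then show ?thesis using kap_cc sc1 sc2 by (auto simp: cc_def)
    next
      case False
      obtain x where x: "x \<in> pts nB" "X = em x" using unem_pts[OF X False] by metis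
      have dx: "d x \<in> pts nB" using bd x(1) by (auto simp: brauer_diagram_def)
      have w: "(fst x \<noteq> fst (d x) \<longrightarrow> (snd x < r \<longleftrightarrow> snd (d x) < r)) \<and>
               (fst x = fst (d x) \<longrightarrow> (snd x < r \<longleftrightarrow> \<not> snd (d x) < r))"
        using wd x(1) by (auto simp: walled_diagram_def left_of_wall_def)
      show ?thesis using w x kap_em[OF x(1)] em_side[OF x(1)] em_side[OF dx] em_fst by metis
    qed
    then show "(fst X \<noteq> fst (kap d X) \<longrightarrow> left_of_wall (Suc r) X = left_of_wall (Suc r) (kap d X)) \<and>
          (fst X = fst (kap d X) \<longrightarrow> left_of_wall (Suc r) X = (\<not> left_of_wall (Suc r) (kap d X)))"
      by (simp add: left_of_wall_def)
  qed
  then show ?thesis unfolding walled_diagram_def using kap_brauer[OF bd] by blast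
qed

lemma kap_inj:
  assumes "brauer_diagram nB d" "brauer_diagram nB d'" "kap d = kap d'"
  shows "d = d'"
proof
  fix x
  show "d x = d' x"
  proof (cases "x \<in> pts nB")
    case True
    have "em (d x) = em (d' x)" using assms(3) kap_em[OF True] by metis
    then show ?thesis using em_pts assms(1,2) True unfolding brauer_diagram_def by metis
  next
    case False
    then show ?thesis using assms(1,2) unfolding brauer_diagram_def by metis
  qed
qed

end


lemma T_cong:
  assumes bd: "brauer_diagram n d" and "\<And>k. k < n \<Longrightarrow> I k = I' k" and "\<And>k. k < n \<Longrightarrow> J k = J' k"
  shows "T n d I J = T n d I' J'"
proof -
  have l: "lab I J x = lab I' J' x" if "x \<in> pts n" for x
    using that assms(2,3) by (auto simp: lab_def pts_iff)
  have "cons n d (lab I J) = cons n d (lab I' J')"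
    unfolding cons_def using l bd by (auto simp: brauer_diagram_def)
  then show ?thesis by (simp add: T_def)
qed

context emb
begin

lemma lab_em: "lab (I \<circ> \<alpha>) (J \<circ> \<beta>) x = lab I J (em x)"
  by (simp add: lab_def em_def)

lemma cons_kap:
  assumes bd: "brauer_diagram nB d"
  shows "cons nA (kap d) (lab I J) \<longleftrightarrow> I c = I (\<beta> k0) \<and> J c = J (\<alpha> k0) \<and> cons nB d (lab (I \<circ> \<alpha>) (J \<circ> \<beta>))"
proof
  assume h: "cons nA (kap d) (lab I J)"
  have "lab I J (kap d (False, c)) = lab I J (False, c)" "lab I J (kap d (True, c)) = lab I J (True, c)"
    using h cc_pts unfolding cons_def cc_def by auto
  then have 1: "I c = I (\<beta> k0)" "J c = J (\<alpha> k0)" by (auto simp: kap_cc lab_def)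
  have "cons nB d (lab (I \<circ> \<alpha>) (J \<circ> \<beta>))"
    unfolding cons_def lab_em
  proof
    fix x assume x: "x \<in> pts nB"
    have dx: "d x \<in> pts nB" using bd x by (auto simp: brauer_diagram_def)
    show "lab I J (em (d x)) = lab I J (em x)"
      using h em_pts[OF x] kap_em[OF x] unfolding cons_def by metis
  qed
  then show "I c = I (\<beta> k0) \<and> J c = J (\<alpha> k0) \<and> cons nB d (lab (I \<circ> \<alpha>) (J \<circ> \<beta>))" using 1 by simp
next
  assume h: "I c = I (\<beta> k0) \<and> J c = J (\<alpha> k0) \<and> cons nB d (lab (I \<circ> \<alpha>) (J \<circ> \<beta>))"
  show "cons nA (kap d) (lab I J)"
    unfolding cons_def
  proof
    fix X assume X: "X \<in> pts nA"
    show "lab I J (kap d X) = lab I J X"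
    proof (cases "X \<in> cc")
      case True
      then show ?thesis using h kap_cc by (auto simp: cc_def lab_def)
    next
      case False
      obtain x where x: "x \<in> pts nB" "X = em x" using unem_pts[OF X False] by metis
      have "lab (I \<circ> \<alpha>) (J \<circ> \<beta>) (d x) = lab (I \<circ> \<alpha>) (J \<circ> \<beta>) x" using h x(1) unfolding cons_def by blast
      then show ?thesis using x kap_em[OF x(1)] lab_em by metis
    qed
  qed
qed

lemma T_kap:
  assumes bd: "brauer_diagram nB d"
  shows "T nA (kap d) I J = (if I c = I (\<beta> k0) \<and> J c = J (\<alpha> k0) then T nB d (I \<circ> \<alpha>) (J \<circ> \<beta>) else 0)"
  using cons_kap[OF bd] by (simp add: T_def)

definition \<rho> :: "(nat \<Rightarrow> nat) \<Rightarrow> nat \<Rightarrow> nat" where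
  "\<rho> J = restrict (\<lambda>k. J (\<beta> k)) {..<nB}"

definition \<sigma> :: "(nat \<Rightarrow> nat) \<Rightarrow> nat \<Rightarrow> nat" where
  "\<sigma> j = restrict (\<lambda>x. if x = c \<or> x = \<alpha> k0 then j k0 else j (bi x)) {..<nA}"

lemma kap_sum:
  assumes b1: "brauer_diagram nB d1" and b2: "brauer_diagram nB d2"
  shows "(\<Sum>J\<in>Lab N nA. T nA (kap d1) I J * T nA (kap d2) J K) =
    (if I c = I (\<beta> k0) \<and> K c = K (\<alpha> k0) then (\<Sum>j\<in>Lab N nB. T nB d1 (I \<circ> \<alpha>) j * T nB d2 j (K \<circ> \<beta>)) else 0)"
proof -
  define G where "G = {J \<in> Lab N nA. J c = J (\<alpha> k0) \<and> J c = J (\<beta> k0)}"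
  have "(\<Sum>J\<in>Lab N nA. T nA (kap d1) I J * T nA (kap d2) J K) =
      (\<Sum>J\<in>Lab N nA. if J c = J (\<alpha> k0) \<and> J c = J (\<beta> k0) then
          (if I c = I (\<beta> k0) \<and> K c = K (\<alpha> k0) then T nB d1 (I \<circ> \<alpha>) (J \<circ> \<beta>) * T nB d2 (J \<circ> \<alpha>) (K \<circ> \<beta>) else 0) else 0)"
    by (rule sum.cong[OF refl], unfold T_kap[OF b1] T_kap[OF b2]) auto
  also have "\<dots> = (\<Sum>J\<in>G. if I c = I (\<beta> k0) \<and> K c = K (\<alpha> k0) then T nB d1 (I \<circ> \<alpha>) (J \<circ> \<beta>) * T nB d2 (J \<circ> \<alpha>) (K \<circ> \<beta>) else 0)"
    unfolding G_def by (simp add: sum.inter_filter[OF finite_Lab])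
  also have "\<dots> = (if I c = I (\<beta> k0) \<and> K c = K (\<alpha> k0) then (\<Sum>J\<in>G. T nB d1 (I \<circ> \<alpha>) (\<rho> J) * T nB d2 (\<rho> J) (K \<circ> \<beta>)) else 0)"
  proof (cases "I c = I (\<beta> k0) \<and> K c = K (\<alpha> k0)")
    case True
    have "T nB d1 (I \<circ> \<alpha>) (J \<circ> \<beta>) * T nB d2 (J \<circ> \<alpha>) (K \<circ> \<beta>) = T nB d1 (I \<circ> \<alpha>) (\<rho> J) * T nB d2 (\<rho> J) (K \<circ> \<beta>)"
      if J: "J \<in> G" for J
    proof -
      have "T nB d1 (I \<circ> \<alpha>) (J \<circ> \<beta>) = T nB d1 (I \<circ> \<alpha>) (\<rho> J)"
        by (rule T_cong[OF b1]) (auto simp: \<rho>_def)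
      moreover have "T nB d2 (J \<circ> \<alpha>) (K \<circ> \<beta>) = T nB d2 (\<rho> J) (K \<circ> \<beta>)"
      proof (rule T_cong[OF b2])
        fix k assume k: "k < nB"
        show "(J \<circ> \<alpha>) k = \<rho> J k"
        proof (cases "k = k0")
          case True then show ?thesis using J k unfolding G_def \<rho>_def by auto
        next
          case False then show ?thesis using mid[OF k] k unfolding \<rho>_def by auto
        qed
      qed simp
      ultimately show ?thesis by simp
    qed
    then show ?thesis using True by simp
  next
    case False
    then show ?thesis by (simp only: if_False sum.neutral_const)
  qed
  also have "(\<Sum>J\<in>G. T nB d1 (I \<circ> \<alpha>) (\<rho> J) * T nB d2 (\<rho> J) (K \<circ> \<beta>)) =
             (\<Sum>j\<in>Lab N nB. T nB d1 (I \<circ> \<alpha>) j * T nB d2 j (K \<circ> \<beta>))"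
  proof (rule sum.reindex_bij_witness[of _ \<sigma> \<rho>])
    fix J assume J: "J \<in> G"
    have JL: "J \<in> Lab N nA" and Jc: "J c = J (\<alpha> k0)" "J c = J (\<beta> k0)" using J unfolding G_def by auto
    show "\<sigma> (\<rho> J) = J"
    proof
      fix x
      show "\<sigma> (\<rho> J) x = J x"
      proof (cases "x < nA")
        case False
        then show ?thesis using JL unfolding \<sigma>_def Lab_def PiE_def extensional_def by auto
      next
        case True
        show ?thesis
        proof (cases "x = c \<or> x = \<alpha> k0")
          case True2: True
          then show ?thesis using True Jc k0n unfolding \<sigma>_def \<rho>_def by auto
        next
          case False
          then have "bi x < nB" "\<beta> (bi x) = x" using \<beta>2[OF True] by auto
          then show ?thesis using True False unfolding \<sigma>_def \<rho>_def by auto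
        qed
      qed
    qed
    show "\<rho> J \<in> Lab N nB"
      using JL \<beta>1 unfolding \<rho>_def Lab_def by (auto simp: PiE_iff)
  next
    fix j assume j: "j \<in> Lab N nB"
    show "\<rho> (\<sigma> j) = j"
    proof
      fix k
      show "\<rho> (\<sigma> j) k = j k"
      proof (cases "k < nB")
        case True
        then show ?thesis using \<beta>1[OF True] \<beta>lt[OF True] unfolding \<rho>_def \<sigma>_def by auto
      next
        case False
        then show ?thesis using j unfolding \<rho>_def Lab_def PiE_def extensional_def by auto
      qed
    qed
    have jv: "k < nB \<Longrightarrow> j k < N" for k using j unfolding Lab_def by auto
    have "\<sigma> j \<in> Lab N nA"
      unfolding Lab_def \<sigma>_def
    proof (rule restrict_PiE_iff[THEN iffD2], intro ballI)
      fix x assume x: "x \<in> {..<nA}"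
      show "(if x = c \<or> x = \<alpha> k0 then j k0 else j (bi x)) \<in> {..<N}"
        using jv[OF k0n] jv \<beta>2 x by auto
    qed
    moreover have "\<sigma> j c = \<sigma> j (\<alpha> k0)" "\<sigma> j c = \<sigma> j (\<beta> k0)"
      using cm bk0 \<beta>1[OF k0n] unfolding \<sigma>_def by auto
    ultimately show "\<sigma> j \<in> G" unfolding G_def by simp
  qed simp
  finally show ?thesis by simp
qed

lemma kap_hom:
  assumes b1: "brauer_diagram nB d1" and b2: "brauer_diagram nB d2"
  shows "dcomp nA (kap d1) (kap d2) = kap (dcomp nB d1 d2) \<and> loops nA (kap d1) (kap d2) = loops nB d1 d2"
proof -
  define N where "N = 2 * nA + 2"
  have N: "2 * nA \<le> N" "2 \<le> N" unfolding N_def by auto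
  have b12: "brauer_diagram nB (dcomp nB d1 d2)" by (rule brauer_compose[OF b1 b2])
  have k1: "brauer_diagram nA (kap d1)" and k2: "brauer_diagram nA (kap d2)"
    using kap_brauer b1 b2 by auto
  have kc: "brauer_diagram nA (dcomp nA (kap d1) (kap d2))" by (rule brauer_compose[OF k1 k2])
  have k12: "brauer_diagram nA (kap (dcomp nB d1 d2))" by (rule kap_brauer[OF b12])
  have eq: "N ^ loops nB d1 d2 * T nA (kap (dcomp nB d1 d2)) I K =
            N ^ loops nA (kap d1) (kap d2) * T nA (dcomp nA (kap d1) (kap d2)) I K"
    if I: "I \<in> Lab N nA" and K: "K \<in> Lab N nA" for I K
  proof -
    have bI: "bnd N nB (I \<circ> \<alpha>)" using Lab_bnd[OF I] \<alpha>lt unfolding bnd_def by auto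
    have bK: "bnd N nB (K \<circ> \<beta>)" using Lab_bnd[OF K] \<beta>lt unfolding bnd_def by auto
    have "N ^ loops nA (kap d1) (kap d2) * T nA (dcomp nA (kap d1) (kap d2)) I K =
          (\<Sum>J\<in>Lab N nA. T nA (kap d1) I J * T nA (kap d2) J K)"
      using hom[OF k1 k2 Lab_bnd[OF I] Lab_bnd[OF K]] by simp
    also have "\<dots> = (if I c = I (\<beta> k0) \<and> K c = K (\<alpha> k0) then N ^ loops nB d1 d2 * T nB (dcomp nB d1 d2) (I \<circ> \<alpha>) (K \<circ> \<beta>) else 0)"
      using kap_sum[OF b1 b2] hom[OF b1 b2 bI bK] by simp
    also have "\<dots> = N ^ loops nB d1 d2 * T nA (kap (dcomp nB d1 d2)) I K"
      using T_kap[OF b12] by simp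
    finally show ?thesis by simp
  qed
  show ?thesis using faithful[OF k12 kc N eq] by simp
qed

end


lemma top_inherit:
  assumes b1: "brauer_diagram n D1" and b2: "brauer_diagram n D2" and x: "x \<in> pts n"
    and f: "fst x = False" "fst (D1 x) = False"
  shows "dcomp n D1 D2 x = D1 x"
proof -
  have y: "D1 x \<in> pts n" "D1 x \<noteq> x" using b1 x by (auto simp: brauer_diagram_def)
  have "(lift_top x, lift_top (D1 x)) \<in> stack_edges n D1 D2" using x unfolding stack_edges_def by blast
  then have "(lift_top x, lift_top (D1 x)) \<in> stack_conn n D1 D2" unfolding stack_conn_def by blast
  moreover have "lift_top x = outer x" "lift_top (D1 x) = outer (D1 x)" using f
    by (cases x, cases "D1 x", simp add: lift_top_def outer_def)+
  ultimately show ?thesis using compose_unique[OF b1 b2 x y(1) y(2)] by simp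
qed

lemma bot_inherit:
  assumes b1: "brauer_diagram n D1" and b2: "brauer_diagram n D2" and x: "x \<in> pts n"
    and f: "fst x = True" "fst (D2 x) = True"
  shows "dcomp n D1 D2 x = D2 x"
proof -
  have y: "D2 x \<in> pts n" "D2 x \<noteq> x" using b2 x by (auto simp: brauer_diagram_def)
  have "(lift_bot x, lift_bot (D2 x)) \<in> stack_edges n D1 D2" using x unfolding stack_edges_def by blast
  then have "(lift_bot x, lift_bot (D2 x)) \<in> stack_conn n D1 D2" unfolding stack_conn_def by blast
  moreover have "lift_bot x = outer x" "lift_bot (D2 x) = outer (D2 x)" using f
    by (cases x, cases "D2 x", simp add: lift_bot_def outer_def)+
  ultimately show ?thesis using compose_unique[OF b1 b2 x y(1) y(2)] by simp
qed

context emb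
begin

lemma image_char:
  assumes wD: "walled_diagram (Suc r) (Suc s) D"
    and D1: "D (False, c) = (False, \<beta> k0)" and D2: "D (True, c) = (True, \<alpha> k0)"
  shows "\<exists>d. walled_diagram r s d \<and> D = kap d"
proof -
  have bD: "brauer_diagram nA D" using wD by (simp add: walled_diagram_def)
  have Dp: "X \<in> pts nA \<Longrightarrow> D X \<in> pts nA \<and> D X \<noteq> X \<and> D (D X) = X" for X
    using bD by (auto simp: brauer_diagram_def)
  have Dout: "X \<notin> pts nA \<Longrightarrow> D X = X" for X using bD unfolding brauer_diagram_def by blast
  have D3: "D (False, \<beta> k0) = (False, c)" "D (True, \<alpha> k0) = (True, c)"
    using Dp[of "(False, c)"] Dp[of "(True, c)"] D1 D2 cc_pts by (auto simp: cc_def)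
  have Dcc: "X \<in> pts nA \<Longrightarrow> X \<notin> cc \<Longrightarrow> D X \<notin> cc" for X
  proof
    assume X: "X \<in> pts nA" "X \<notin> cc" "D X \<in> cc"
    have "D (D X) \<in> cc" using X(3) D1 D2 D3 by (auto simp: cc_def)
    then show False using Dp[OF X(1)] X(2) by simp
  qed
  define d where "d x = (if x \<in> pts nB then unem (D (em x)) else x)" for x
  have dem: "em (d x) = D (em x)" if x: "x \<in> pts nB" for x
  proof -
    have "em x \<in> pts nA" "em x \<notin> cc" using em_pts[OF x] by auto
    then have "D (em x) \<in> pts nA" "D (em x) \<notin> cc" using Dp Dcc by auto
    then show ?thesis using unem_pts x unfolding d_def by simp
  qed
  have dpts: "d x \<in> pts nB" if x: "x \<in> pts nB" for x
  proof -
    have "em x \<in> pts nA" "em x \<notin> cc" using em_pts[OF x] by auto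
    then have "D (em x) \<in> pts nA" "D (em x) \<notin> cc" using Dp Dcc by auto
    then show ?thesis using unem_pts x unfolding d_def by simp
  qed
  have bd: "brauer_diagram nB d"
    unfolding brauer_diagram_def
  proof (intro conjI ballI allI impI)
    fix x assume x: "x \<in> pts nB"
    show "d x \<in> pts nB" by (rule dpts[OF x])
    show "d x \<noteq> x"
    proof
      assume "d x = x"
      then have "D (em x) = em x" using dem[OF x] by simp
      then show False using Dp em_pts[OF x] by metis
    qed
    have "em (d (d x)) = D (D (em x))" using dem[OF x] dem[OF dpts[OF x]] by simp
    also have "\<dots> = em x" using Dp em_pts[OF x] by metis
    finally show "d (d x) = x" using em_pts[OF x] em_pts[OF dpts[OF dpts[OF x]]] by metis
  next
    fix x assume "x \<notin> pts nB" then show "d x = x" by (simp add: d_def)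
  qed
  have wd: "walled_diagram r s d"
  proof -
    have "(fst x \<noteq> fst (d x) \<longrightarrow> left_of_wall r x = left_of_wall r (d x)) \<and>
          (fst x = fst (d x) \<longrightarrow> left_of_wall r x = (\<not> left_of_wall r (d x)))" if x: "x \<in> pts nB" for x
    proof -
      have ex: "em x \<in> pts nA" using em_pts[OF x] by simp
      have w: "(fst (em x) \<noteq> fst (D (em x)) \<longrightarrow> (snd (em x) < Suc r \<longleftrightarrow> snd (D (em x)) < Suc r)) \<and>
               (fst (em x) = fst (D (em x)) \<longrightarrow> (snd (em x) < Suc r \<longleftrightarrow> \<not> snd (D (em x)) < Suc r))"
        using wD ex by (auto simp: walled_diagram_def left_of_wall_def)
      show ?thesis using w dem[OF x] em_side[OF x] em_side[OF dpts[OF x]] em_fst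
        by (metis left_of_wall_def)
    qed
    then show ?thesis using bd unfolding walled_diagram_def by blast
  qed
  have "D = kap d"
  proof
    fix X
    show "D X = kap d X"
    proof (cases "X \<in> pts nA")
      case False
      then show ?thesis using Dout kap_out by simp
    next
      case True
      show ?thesis
      proof (cases "X \<in> cc")
        case True
        then show ?thesis using D1 D2 D3 kap_cc by (auto simp: cc_def)
      next
        case False
        obtain x where x: "x \<in> pts nB" "X = em x" using unem_pts[OF \<open>X \<in> pts nA\<close> False] by metis
        then show ?thesis using kap_em[OF x(1)] dem[OF x(1)] by simp
      qed
    qed
  qed
  then show ?thesis using wd by blast
qed

definition E :: diagram where "E = kap (idd nB)"

lemma E_walled: "walled_diagram (Suc r) (Suc s) E"
  unfolding E_def by (rule kap_walled[OF idd_walled])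

lemma sandwich:
  assumes wD: "walled_diagram (Suc r) (Suc s) D"
  shows "\<exists>d. walled_diagram r s d \<and> dcomp nA E (dcomp nA D E) = kap d"
proof -
  have bD: "brauer_diagram nA D" using wD by (simp add: walled_diagram_def)
  have bE: "brauer_diagram nA E" using E_walled by (simp add: walled_diagram_def)
  have wDE: "walled_diagram (Suc r) (Suc s) (dcomp nA D E)"
    using walled_compose[OF wD E_walled] by simp
  have bDE: "brauer_diagram nA (dcomp nA D E)" using wDE by (simp add: walled_diagram_def)
  have w: "walled_diagram (Suc r) (Suc s) (dcomp nA E (dcomp nA D E))"
    using walled_compose[OF E_walled wDE] by simp
  have p1: "(False, c) \<in> pts nA" "(True, c) \<in> pts nA" using cc_pts by (auto simp: cc_def)
  have E1: "E (False, c) = (False, \<beta> k0)" "E (True, c) = (True, \<alpha> k0)" unfolding E_def using kap_cc by auto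
  have "dcomp nA D E (True, c) = (True, \<alpha> k0)"
    using bot_inherit[OF bD bE p1(2)] E1 by simp
  then have a: "dcomp nA E (dcomp nA D E) (True, c) = (True, \<alpha> k0)"
    using bot_inherit[OF bE bDE p1(2)] by simp
  have b: "dcomp nA E (dcomp nA D E) (False, c) = (False, \<beta> k0)"
    using top_inherit[OF bE bDE p1(1)] E1 by simp
  show ?thesis using image_char[OF w b a] by blast
qed

end


definition bas :: "diagram \<Rightarrow> diagram \<Rightarrow> 'k::field" where
  "bas D X = (if X = D then 1 else 0)"

lemma WB_walled: "d \<in> WB r s \<longleftrightarrow> walled_diagram r s d"
  by (simp add: WB_def)

lemma WB_comp: "d1 \<in> WB r s \<Longrightarrow> d2 \<in> WB r s \<Longrightarrow> dcomp (r + s) d1 d2 \<in> WB r s"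
  by (simp add: WB_def walled_compose)

lemma finite_WB: "finite (WB r s)"
proof -
  define n where "n = r + s"
  have sub: "(\<lambda>d. restrict d (pts n)) ` WB r s \<subseteq> PiE (pts n) (\<lambda>_. pts n)"
    by (auto simp: WB_def walled_diagram_def brauer_diagram_def n_def)
  have fin: "finite (PiE (pts n) (\<lambda>_. pts n))"
    by (rule finite_PiE) (auto simp: pts_def)
  have inj: "inj_on (\<lambda>d. restrict d (pts n)) (WB r s)"
  proof (rule inj_onI)
    fix d d' assume d: "d \<in> WB r s" "d' \<in> WB r s" and eq: "restrict d (pts n) = restrict d' (pts n)"
    show "d = d'"
    proof
      fix x show "d x = d' x"
      proof (cases "x \<in> pts n")
        case True then show ?thesis using eq by (metis restrict_apply')
      next
        case False then show ?thesis using d by (cases x) (auto simp: WB_def walled_diagram_def brauer_diagram_def n_def)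
      qed
    qed
  qed
  show ?thesis using finite_imageD[OF finite_subset[OF sub fin] inj] .
qed

lemma sum_collapse:
  fixes F :: "'a \<Rightarrow> 'b \<Rightarrow> 'k::field"
  assumes fA: "finite A" and fB: "finite B" and fC: "finite C"
    and g: "\<And>x y. x \<in> A \<Longrightarrow> y \<in> B \<Longrightarrow> g x y \<in> C"
  shows "(\<Sum>e\<in>C. (\<Sum>x\<in>A. \<Sum>y\<in>B. if g x y = e then F x y else 0) * H e) =
         (\<Sum>x\<in>A. \<Sum>y\<in>B. F x y * H (g x y))"
proof -
  have "(\<Sum>e\<in>C. (\<Sum>x\<in>A. \<Sum>y\<in>B. if g x y = e then F x y else 0) * H e) =
        (\<Sum>e\<in>C. \<Sum>x\<in>A. \<Sum>y\<in>B. if g x y = e then F x y * H e else 0)"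
    by (auto simp: sum_distrib_right intro!: sum.cong)
  also have "\<dots> = (\<Sum>x\<in>A. \<Sum>e\<in>C. \<Sum>y\<in>B. if g x y = e then F x y * H e else 0)"
    by (rule sum.swap)
  also have "\<dots> = (\<Sum>x\<in>A. \<Sum>y\<in>B. \<Sum>e\<in>C. if g x y = e then F x y * H e else 0)"
    by (rule sum.cong[OF refl], rule sum.swap)
  also have "\<dots> = (\<Sum>x\<in>A. \<Sum>y\<in>B. F x y * H (g x y))"
    using g fC by (auto intro!: sum.cong)
  finally show ?thesis .
qed

lemma sum_collapse1:
  fixes F :: "'a \<Rightarrow> 'k::field"
  assumes fA: "finite A" and fC: "finite C"
    and g: "\<And>x. x \<in> A \<Longrightarrow> g x \<in> C"
  shows "(\<Sum>e\<in>C. (\<Sum>x\<in>A. if g x = e then F x else 0) * H e) = (\<Sum>x\<in>A. F x * H (g x))"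
proof -
  have "(\<Sum>e\<in>C. (\<Sum>x\<in>A. if g x = e then F x else 0) * H e) =
        (\<Sum>e\<in>C. \<Sum>x\<in>A. if g x = e then F x * H e else 0)"
    by (auto simp: sum_distrib_right intro!: sum.cong)
  also have "\<dots> = (\<Sum>x\<in>A. \<Sum>e\<in>C. if g x = e then F x * H e else 0)"
    by (rule sum.swap)
  also have "\<dots> = (\<Sum>x\<in>A. F x * H (g x))"
    using g fC by (auto intro!: sum.cong)
  finally show ?thesis .
qed

lemma wb_mult_cong:
  "(\<And>d. d \<in> WB r s \<Longrightarrow> a d = a' d) \<Longrightarrow> (\<And>d. d \<in> WB r s \<Longrightarrow> b d = b' d) \<Longrightarrow>
   wb_mult r s \<delta> a b = wb_mult r s \<delta> a' b'"
  unfolding wb_mult_def by (intro ext sum.cong refl) auto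

lemma wb_mult_carrier: "wb_mult r s \<delta> a b \<in> wb_carrier r s"
  unfolding wb_carrier_def wb_mult_def using WB_comp by (auto intro!: sum.neutral)

lemma wb_mult_assoc:
  fixes a b c :: "diagram \<Rightarrow> 'k::field"
  shows "wb_mult r s \<delta> (wb_mult r s \<delta> a b) c = wb_mult r s \<delta> a (wb_mult r s \<delta> b c)"
proof
  fix X
  define W where "W = WB r s"
  define n where "n = r + s"
  have fW: "finite W" unfolding W_def by (rule finite_WB)
  have gW: "\<And>x y. x \<in> W \<Longrightarrow> y \<in> W \<Longrightarrow> dcomp n x y \<in> W" unfolding W_def n_def by (rule WB_comp)
  have L: "wb_mult r s \<delta> (wb_mult r s \<delta> a b) c X =
    (\<Sum>d3\<in>W. \<Sum>d1\<in>W. \<Sum>d2\<in>W. a d1 * b d2 * \<delta> ^ loops n d1 d2 *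
        (if dcomp n (dcomp n d1 d2) d3 = X then c d3 * \<delta> ^ loops n (dcomp n d1 d2) d3 else 0))"
  proof -
    have "wb_mult r s \<delta> (wb_mult r s \<delta> a b) c X =
      (\<Sum>e\<in>W. \<Sum>d3\<in>W. (\<Sum>d1\<in>W. \<Sum>d2\<in>W. if dcomp n d1 d2 = e then a d1 * b d2 * \<delta> ^ loops n d1 d2 else 0) *
          (if dcomp n e d3 = X then c d3 * \<delta> ^ loops n e d3 else 0))"
      unfolding wb_mult_def W_def n_def by (intro sum.cong refl) (auto simp: mult.assoc)
    also have "\<dots> = (\<Sum>d3\<in>W. \<Sum>e\<in>W. (\<Sum>d1\<in>W. \<Sum>d2\<in>W. if dcomp n d1 d2 = e then a d1 * b d2 * \<delta> ^ loops n d1 d2 else 0) *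
          (if dcomp n e d3 = X then c d3 * \<delta> ^ loops n e d3 else 0))"
      by (rule sum.swap)
    also have "\<dots> = (\<Sum>d3\<in>W. \<Sum>d1\<in>W. \<Sum>d2\<in>W. a d1 * b d2 * \<delta> ^ loops n d1 d2 *
        (if dcomp n (dcomp n d1 d2) d3 = X then c d3 * \<delta> ^ loops n (dcomp n d1 d2) d3 else 0))"
      by (rule sum.cong[OF refl], rule sum_collapse[OF fW fW fW gW])
    finally show ?thesis .
  qed
  have R: "wb_mult r s \<delta> a (wb_mult r s \<delta> b c) X =
    (\<Sum>d1\<in>W. \<Sum>d2\<in>W. \<Sum>d3\<in>W. b d2 * c d3 * \<delta> ^ loops n d2 d3 *
        (if dcomp n d1 (dcomp n d2 d3) = X then a d1 * \<delta> ^ loops n d1 (dcomp n d2 d3) else 0))"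
  proof -
    have "wb_mult r s \<delta> a (wb_mult r s \<delta> b c) X =
      (\<Sum>d1\<in>W. \<Sum>f\<in>W. (\<Sum>d2\<in>W. \<Sum>d3\<in>W. if dcomp n d2 d3 = f then b d2 * c d3 * \<delta> ^ loops n d2 d3 else 0) *
          (if dcomp n d1 f = X then a d1 * \<delta> ^ loops n d1 f else 0))"
      unfolding wb_mult_def W_def n_def by (intro sum.cong refl) (auto simp: mult.assoc mult.commute mult.left_commute)
    also have "\<dots> = (\<Sum>d1\<in>W. \<Sum>d2\<in>W. \<Sum>d3\<in>W. b d2 * c d3 * \<delta> ^ loops n d2 d3 *
        (if dcomp n d1 (dcomp n d2 d3) = X then a d1 * \<delta> ^ loops n d1 (dcomp n d2 d3) else 0))"
      by (rule sum.cong[OF refl], rule sum_collapse[OF fW fW fW gW])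
    finally show ?thesis .
  qed
  have tm: "a d1 * b d2 * \<delta> ^ loops n d1 d2 *
        (if dcomp n (dcomp n d1 d2) d3 = X then c d3 * \<delta> ^ loops n (dcomp n d1 d2) d3 else 0) =
      b d2 * c d3 * \<delta> ^ loops n d2 d3 *
        (if dcomp n d1 (dcomp n d2 d3) = X then a d1 * \<delta> ^ loops n d1 (dcomp n d2 d3) else 0)"
    if d: "d1 \<in> W" "d2 \<in> W" "d3 \<in> W" for d1 d2 d3
  proof -
    have b: "brauer_diagram n d1" "brauer_diagram n d2" "brauer_diagram n d3"
      using d unfolding W_def n_def WB_def walled_diagram_def by auto
    note A = assoc_diag[OF b]
    have "\<delta> ^ loops n d1 d2 * \<delta> ^ loops n (dcomp n d1 d2) d3 = \<delta> ^ loops n d2 d3 * \<delta> ^ loops n d1 (dcomp n d2 d3)"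
      using A by (simp add: power_add[symmetric])
    then show ?thesis using A by (auto simp: algebra_simps)
  qed
  have "(\<Sum>d3\<in>W. \<Sum>d1\<in>W. \<Sum>d2\<in>W. a d1 * b d2 * \<delta> ^ loops n d1 d2 *
        (if dcomp n (dcomp n d1 d2) d3 = X then c d3 * \<delta> ^ loops n (dcomp n d1 d2) d3 else 0)) =
        (\<Sum>d1\<in>W. \<Sum>d2\<in>W. \<Sum>d3\<in>W. a d1 * b d2 * \<delta> ^ loops n d1 d2 *
        (if dcomp n (dcomp n d1 d2) d3 = X then c d3 * \<delta> ^ loops n (dcomp n d1 d2) d3 else 0))"
    by (subst sum.swap) (rule sum.cong[OF refl], rule sum.swap)
  also have "\<dots> = (\<Sum>d1\<in>W. \<Sum>d2\<in>W. \<Sum>d3\<in>W. b d2 * c d3 * \<delta> ^ loops n d2 d3 *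
        (if dcomp n d1 (dcomp n d2 d3) = X then a d1 * \<delta> ^ loops n d1 (dcomp n d2 d3) else 0))"
    using tm by (intro sum.cong refl) auto
  finally show "wb_mult r s \<delta> (wb_mult r s \<delta> a b) c X = wb_mult r s \<delta> a (wb_mult r s \<delta> b c) X"
    using L R by simp
qed

lemma wb_mult_add_left:
  "wb_mult r s \<delta> (\<lambda>d. x d + y d) b = (\<lambda>d. wb_mult r s \<delta> x b d + wb_mult r s \<delta> y b d)"
  unfolding wb_mult_def by (auto simp: sum.distrib[symmetric] algebra_simps intro!: sum.cong)

lemma wb_mult_add_right:
  "wb_mult r s \<delta> a (\<lambda>d. x d + y d) = (\<lambda>d. wb_mult r s \<delta> a x d + wb_mult r s \<delta> a y d)"
  unfolding wb_mult_def by (auto simp: sum.distrib[symmetric] algebra_simps intro!: sum.cong)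

lemma wb_mult_smult_left:
  "wb_mult r s \<delta> (\<lambda>d. c * x d) b = (\<lambda>d. c * wb_mult r s \<delta> x b d)"
  unfolding wb_mult_def by (auto simp: sum_distrib_left algebra_simps intro!: sum.cong)

lemma wb_mult_smult_right:
  "wb_mult r s \<delta> a (\<lambda>d. c * x d) = (\<lambda>d. c * wb_mult r s \<delta> a x d)"
  unfolding wb_mult_def by (auto simp: sum_distrib_left algebra_simps intro!: sum.cong)

lemma wb_mult_zero_left: "wb_mult r s \<delta> (\<lambda>_. 0) b = (\<lambda>_. 0)"
  unfolding wb_mult_def by (simp cong: if_cong)

lemma wb_mult_zero_right: "wb_mult r s \<delta> a (\<lambda>_. 0) = (\<lambda>_. 0)"
  unfolding wb_mult_def by (simp cong: if_cong)

lemma wb_mult_bas_right: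
  assumes D: "D \<in> WB r s"
  shows "wb_mult r s \<delta> a (bas D) X = (\<Sum>d\<in>WB r s. if dcomp (r + s) d D = X then a d * \<delta> ^ loops (r + s) d D else 0)"
proof -
  have "(\<Sum>d2\<in>WB r s. if dcomp (r + s) d1 d2 = X then a d1 * bas D d2 * \<delta> ^ loops (r + s) d1 d2 else 0) =
        (\<Sum>d2\<in>WB r s. if D = d2 then (if dcomp (r + s) d1 D = X then a d1 * \<delta> ^ loops (r + s) d1 D else 0) else 0)" for d1
    by (intro sum.cong refl) (auto simp: bas_def)
  also have "\<dots> d1 = (if dcomp (r + s) d1 D = X then a d1 * \<delta> ^ loops (r + s) d1 D else 0)" for d1
    using D finite_WB by simp
  finally show ?thesis unfolding wb_mult_def by simp
qed

lemma wb_mult_bas_left: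
  assumes D: "D \<in> WB r s"
  shows "wb_mult r s \<delta> (bas D) b X = (\<Sum>d\<in>WB r s. if dcomp (r + s) D d = X then b d * \<delta> ^ loops (r + s) D d else 0)"
proof -
  have "(\<Sum>d2\<in>WB r s. if dcomp (r + s) d1 d2 = X then bas D d1 * b d2 * \<delta> ^ loops (r + s) d1 d2 else 0) =
        (if D = d1 then (\<Sum>d2\<in>WB r s. if dcomp (r + s) D d2 = X then b d2 * \<delta> ^ loops (r + s) D d2 else 0) else 0)" for d1
    by (cases "D = d1") (simp_all add: bas_def cong: if_cong)
  then have "wb_mult r s \<delta> (bas D) b X = (\<Sum>d1\<in>WB r s. if D = d1 then (\<Sum>d2\<in>WB r s. if dcomp (r + s) D d2 = X then b d2 * \<delta> ^ loops (r + s) D d2 else 0) else 0)"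
    unfolding wb_mult_def by simp
  also have "\<dots> = (\<Sum>d\<in>WB r s. if dcomp (r + s) D d = X then b d * \<delta> ^ loops (r + s) D d else 0)"
    using D finite_WB by simp
  finally show ?thesis .
qed

lemma idd_WB: "idd (r + s) \<in> WB r s"
  by (simp add: WB_def idd_walled)

lemma wb_mult_id_right:
  assumes "a \<in> wb_carrier r s"
  shows "wb_mult r s \<delta> a (bas (idd (r + s))) = a"
proof
  fix X
  have "wb_mult r s \<delta> a (bas (idd (r + s))) X = (\<Sum>d\<in>WB r s. if d = X then a d else 0)"
    unfolding wb_mult_bas_right[OF idd_WB]
    by (intro sum.cong refl) (auto simp: id_right WB_def walled_diagram_def)
  also have "\<dots> = a X" using assms finite_WB unfolding wb_carrier_def by (auto simp: sum.delta')
  finally show "wb_mult r s \<delta> a (bas (idd (r + s))) X = a X" .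
qed

lemma wb_mult_id_left:
  assumes "a \<in> wb_carrier r s"
  shows "wb_mult r s \<delta> (bas (idd (r + s))) a = a"
proof
  fix X
  have "wb_mult r s \<delta> (bas (idd (r + s))) a X = (\<Sum>d\<in>WB r s. if d = X then a d else 0)"
    unfolding wb_mult_bas_left[OF idd_WB]
    by (intro sum.cong refl) (auto simp: id_left WB_def walled_diagram_def)
  also have "\<dots> = a X" using assms finite_WB unfolding wb_carrier_def by (auto simp: sum.delta')
  finally show "wb_mult r s \<delta> (bas (idd (r + s))) a X = a X" .
qed


inductive_set spn :: "(diagram \<Rightarrow> 'k::field) set \<Rightarrow> (diagram \<Rightarrow> 'k) set" for G where
  zero: "(\<lambda>_. 0) \<in> spn G"
| gen: "g \<in> G \<Longrightarrow> g \<in> spn G"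
| add: "x \<in> spn G \<Longrightarrow> y \<in> spn G \<Longrightarrow> (\<lambda>d. x d + y d) \<in> spn G"
| smul: "x \<in> spn G \<Longrightarrow> (\<lambda>d. c * x d) \<in> spn G"

lemma spn_sub:
  assumes "G \<subseteq> wb_carrier r s" "x \<in> spn G" shows "x \<in> wb_carrier r s"
  using assms(2) by (induction x rule: spn.induct) (use assms(1) in \<open>auto simp: wb_carrier_def\<close>)

lemma spn_zero:
  assumes "G \<subseteq> {\<lambda>_. 0}" "x \<in> spn G" shows "x = (\<lambda>_. 0)"
  using assms(2) by (induction x rule: spn.induct) (use assms(1) in auto)

lemma wb_prod_Cons: "xs \<noteq> [] \<Longrightarrow> wb_prod r s \<delta> (x # xs) = wb_mult r s \<delta> x (wb_prod r s \<delta> xs)"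
  by (cases xs) auto

lemma bas_carrier: "D \<in> WB r s \<Longrightarrow> bas D \<in> wb_carrier r s"
  by (auto simp: wb_carrier_def bas_def)

context emb
begin

lemma kap_WB: "d \<in> WB r s \<Longrightarrow> kap d \<in> WB (Suc r) (Suc s)"
  by (simp add: WB_def kap_walled)

lemma kap_inj_WB: "d \<in> WB r s \<Longrightarrow> d' \<in> WB r s \<Longrightarrow> kap d = kap d' \<Longrightarrow> d = d'"
  using kap_inj by (auto simp: WB_def walled_diagram_def)

lemma E_WB: "E \<in> WB (Suc r) (Suc s)"
  using E_walled by (simp add: WB_def)

context
  fixes \<delta> :: "'k::field"
begin

definition psi :: "(diagram \<Rightarrow> 'k) \<Rightarrow> diagram \<Rightarrow> 'k" where
  "psi y X = (\<Sum>d\<in>WB r s. if kap d = X then y d else 0)"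

lemma psi_at: "d \<in> WB r s \<Longrightarrow> psi y (kap d) = y d"
proof -
  assume d: "d \<in> WB r s"
  have "psi y (kap d) = (\<Sum>d'\<in>WB r s. if d' = d then y d' else 0)"
    unfolding psi_def using kap_inj_WB d by (intro sum.cong refl) auto
  also have "\<dots> = y d" using d finite_WB by simp
  finally show ?thesis .
qed

lemma psi_off: "X \<notin> kap ` WB r s \<Longrightarrow> psi y X = 0"
  unfolding psi_def by (auto intro!: sum.neutral)

lemma psi_carrier: "psi y \<in> wb_carrier (Suc r) (Suc s)"
proof -
  have "psi y d = 0" if "d \<notin> WB (Suc r) (Suc s)" for d
    by (rule psi_off) (use that kap_WB in blast)
  then show ?thesis unfolding wb_carrier_def by blast
qed

lemma sum_WA:
  assumes "\<And>D. D \<in> WB (Suc r) (Suc s) \<Longrightarrow> D \<notin> kap ` WB r s \<Longrightarrow> f D = (0::'k)"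
  shows "(\<Sum>D\<in>WB (Suc r) (Suc s). f D) = (\<Sum>d\<in>WB r s. f (kap d))"
proof -
  have sub: "kap ` WB r s \<subseteq> WB (Suc r) (Suc s)" using kap_WB by blast
  have "(\<Sum>D\<in>WB (Suc r) (Suc s). f D) = (\<Sum>D\<in>kap ` WB r s. f D)"
    by (rule sum.mono_neutral_right) (use assms sub finite_WB in auto)
  also have "\<dots> = (\<Sum>d\<in>WB r s. f (kap d))"
    by (rule sum.reindex_cong[of kap]) (auto simp: inj_on_def kap_inj_WB)
  finally show ?thesis .
qed

lemma psi_mult:
  "wb_mult (Suc r) (Suc s) \<delta> (psi y) (psi z) = psi (wb_mult r s \<delta> y z)"
proof
  fix X
  have "wb_mult (Suc r) (Suc s) \<delta> (psi y) (psi z) X =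
    (\<Sum>d1\<in>WB r s. \<Sum>d2\<in>WB r s. if dcomp nA (kap d1) (kap d2) = X then
        y d1 * z d2 * \<delta> ^ loops nA (kap d1) (kap d2) else 0)"
  proof -
    have "wb_mult (Suc r) (Suc s) \<delta> (psi y) (psi z) X =
      (\<Sum>D1\<in>WB (Suc r) (Suc s). \<Sum>D2\<in>WB (Suc r) (Suc s). if dcomp nA D1 D2 = X then
        psi y D1 * psi z D2 * \<delta> ^ loops nA D1 D2 else 0)"
      unfolding wb_mult_def by simp
    also have "\<dots> = (\<Sum>d1\<in>WB r s. \<Sum>D2\<in>WB (Suc r) (Suc s). if dcomp nA (kap d1) D2 = X then
        psi y (kap d1) * psi z D2 * \<delta> ^ loops nA (kap d1) D2 else 0)"
      by (rule sum_WA) (auto simp: psi_off intro!: sum.neutral)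
    also have "\<dots> = (\<Sum>d1\<in>WB r s. \<Sum>d2\<in>WB r s. if dcomp nA (kap d1) (kap d2) = X then
        psi y (kap d1) * psi z (kap d2) * \<delta> ^ loops nA (kap d1) (kap d2) else 0)"
      by (rule sum.cong[OF refl], rule sum_WA) (auto simp: psi_off)
    also have "\<dots> = (\<Sum>d1\<in>WB r s. \<Sum>d2\<in>WB r s. if dcomp nA (kap d1) (kap d2) = X then
        y d1 * z d2 * \<delta> ^ loops nA (kap d1) (kap d2) else 0)"
      by (intro sum.cong refl) (simp add: psi_at)
    finally show ?thesis .
  qed
  also have "\<dots> = (\<Sum>d1\<in>WB r s. \<Sum>d2\<in>WB r s. if kap (dcomp nB d1 d2) = X then
        y d1 * z d2 * \<delta> ^ loops nB d1 d2 else 0)"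
  proof (intro sum.cong refl)
    fix d1 d2 assume d: "d1 \<in> WB r s" "d2 \<in> WB r s"
    have b: "brauer_diagram nB d1" "brauer_diagram nB d2" using d by (auto simp: WB_def walled_diagram_def)
    show "(if dcomp nA (kap d1) (kap d2) = X then y d1 * z d2 * \<delta> ^ loops nA (kap d1) (kap d2) else 0) =
          (if kap (dcomp nB d1 d2) = X then y d1 * z d2 * \<delta> ^ loops nB d1 d2 else 0)"
      using kap_hom[OF b] by simp
  qed
  also have "\<dots> = psi (wb_mult r s \<delta> y z) X"
  proof (cases "X \<in> kap ` WB r s")
    case True
    then obtain e where e: "e \<in> WB r s" "X = kap e" by blast
    have "psi (wb_mult r s \<delta> y z) X = wb_mult r s \<delta> y z e" using psi_at[OF e(1)] e(2) by simp
    also have "\<dots> = (\<Sum>d1\<in>WB r s. \<Sum>d2\<in>WB r s. if kap (dcomp nB d1 d2) = X then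
        y d1 * z d2 * \<delta> ^ loops nB d1 d2 else 0)"
      unfolding wb_mult_def e(2)
      using kap_inj_WB[OF WB_comp e(1)] by (intro sum.cong refl) auto
    finally show ?thesis by simp
  next
    case False
    then have "kap (dcomp nB d1 d2) \<noteq> X" if "d1 \<in> WB r s" "d2 \<in> WB r s" for d1 d2
      using WB_comp[OF that] by blast
    then show ?thesis using psi_off[OF False] by (auto intro!: sum.neutral)
  qed
  finally show "wb_mult (Suc r) (Suc s) \<delta> (psi y) (psi z) X = psi (wb_mult r s \<delta> y z) X" .
qed

definition eA :: "diagram \<Rightarrow> 'k" where "eA = bas E"

lemma eA_psi: "eA = psi (bas (idd nB))"
proof
  fix X
  have "psi (bas (idd nB)) X = (\<Sum>d\<in>WB r s. if idd nB = d then (if kap d = X then 1 else 0) else 0)"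
    unfolding psi_def bas_def by (intro sum.cong refl) auto
  also have "\<dots> = (if kap (idd nB) = X then 1 else 0)" using idd_WB finite_WB by simp
  finally show "eA X = psi (bas (idd nB)) X" unfolding eA_def bas_def E_def by auto
qed

lemma eA_carrier: "eA \<in> wb_carrier (Suc r) (Suc s)"
  unfolding eA_def by (rule bas_carrier[OF E_WB])

lemma psi_eA_right: "y \<in> wb_carrier r s \<Longrightarrow> wb_mult (Suc r) (Suc s) \<delta> (psi y) eA = psi y"
  unfolding eA_psi psi_mult using wb_mult_id_right by metis

lemma psi_eA_left: "y \<in> wb_carrier r s \<Longrightarrow> wb_mult (Suc r) (Suc s) \<delta> eA (psi y) = psi y"
  unfolding eA_psi psi_mult using wb_mult_id_left by metis

lemma sandwich_alg:
  "\<exists>y\<in>wb_carrier r s. wb_mult (Suc r) (Suc s) \<delta> eA (wb_mult (Suc r) (Suc s) \<delta> a eA) = psi y"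
proof -
  define f where "f = wb_mult (Suc r) (Suc s) \<delta> eA (wb_mult (Suc r) (Suc s) \<delta> a eA)"
  have off: "f X = 0" if X: "X \<notin> kap ` WB r s" for X
  proof -
    have "f X = (\<Sum>F\<in>WB (Suc r) (Suc s). if dcomp nA E F = X then
        wb_mult (Suc r) (Suc s) \<delta> a eA F * \<delta> ^ loops nA E F else 0)"
      unfolding f_def eA_def using wb_mult_bas_left[OF E_WB] by simp
    also have "\<dots> = 0"
    proof (rule sum.neutral, intro ballI)
      fix F assume F: "F \<in> WB (Suc r) (Suc s)"
      have "wb_mult (Suc r) (Suc s) \<delta> a eA F = 0" if c: "dcomp nA E F = X"
      proof -
        have "wb_mult (Suc r) (Suc s) \<delta> a eA F = (\<Sum>D\<in>WB (Suc r) (Suc s). if dcomp nA D E = F then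
             a D * \<delta> ^ loops nA D E else 0)"
          unfolding eA_def using wb_mult_bas_right[OF E_WB] by simp
        also have "\<dots> = 0"
        proof (rule sum.neutral, intro ballI)
          fix D assume D: "D \<in> WB (Suc r) (Suc s)"
          have "dcomp nA E (dcomp nA D E) \<in> kap ` WB r s"
            using sandwich[of D] D by (auto simp: WB_def)
          then have "dcomp nA D E \<noteq> F" using c X by blast
          then show "(if dcomp nA D E = F then a D * \<delta> ^ loops nA D E else 0) = 0" by simp
        qed
        finally show ?thesis .
      qed
      then show "(if dcomp nA E F = X then wb_mult (Suc r) (Suc s) \<delta> a eA F * \<delta> ^ loops nA E F else 0) = 0"
        by auto
    qed
    finally show ?thesis .
  qed
  define y where "y d = (if d \<in> WB r s then f (kap d) else 0)" for d
  have yc: "y \<in> wb_carrier r s" unfolding wb_carrier_def y_def by auto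
  have "psi y = f"
  proof
    fix X
    show "psi y X = f X"
    proof (cases "X \<in> kap ` WB r s")
      case True
      then obtain d where "d \<in> WB r s" "X = kap d" by blast
      then show ?thesis using psi_at y_def by simp
    next
      case False
      then show ?thesis using psi_off off by simp
    qed
  qed
  then show ?thesis using yc f_def by metis
qed

end

end


context emb
begin

context
  fixes \<delta> :: "'k::field"
begin

abbreviation "mA \<equiv> wb_mult (Suc r) (Suc s) \<delta>"
abbreviation "mB \<equiv> wb_mult r s \<delta>"

definition Pk :: "(diagram \<Rightarrow> 'k) set \<Rightarrow> nat \<Rightarrow> (diagram \<Rightarrow> 'k) set" where
  "Pk I k = {wb_prod r s \<delta> zs | zs. length zs = k \<and> set zs \<subseteq> I}"

lemma Pk_I: "x = wb_prod r s \<delta> zs \<Longrightarrow> length zs = k \<Longrightarrow> set zs \<subseteq> I \<Longrightarrow> x \<in> Pk I k"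
  unfolding Pk_def by blast

definition gens :: "(diagram \<Rightarrow> 'k) set \<Rightarrow> nat \<Rightarrow> (diagram \<Rightarrow> 'k) set" where
  "gens I k = {mA a (mA (psi y) b) | a b y. a \<in> wb_carrier (Suc r) (Suc s) \<and> b \<in> wb_carrier (Suc r) (Suc s) \<and> y \<in> Pk I k}"

lemma gens_carrier: "gens I k \<subseteq> wb_carrier (Suc r) (Suc s)"
  unfolding gens_def using wb_mult_carrier by blast

lemma spn_left:
  assumes a': "a' \<in> wb_carrier (Suc r) (Suc s)" and x: "x \<in> spn (gens I k)"
  shows "mA a' x \<in> spn (gens I k)"
  using x
proof (induction x rule: spn.induct)
  case zero then show ?case by (simp add: wb_mult_zero_right spn.zero)
next
  case (gen g)
  then obtain a b y where g: "g = mA a (mA (psi y) b)" "a \<in> wb_carrier (Suc r) (Suc s)"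
    "b \<in> wb_carrier (Suc r) (Suc s)" "y \<in> Pk I k" unfolding gens_def by blast
  have "mA a' g = mA (mA a' a) (mA (psi y) b)" using g by (simp add: wb_mult_assoc)
  moreover have "mA a' a \<in> wb_carrier (Suc r) (Suc s)" by (rule wb_mult_carrier)
  ultimately have "mA a' g \<in> gens I k" using g unfolding gens_def by blast
  then show ?case by (rule spn.gen)
next
  case (add x y) then show ?case by (simp add: wb_mult_add_right spn.add)
next
  case (smul x c) then show ?case by (simp add: wb_mult_smult_right spn.smul)
qed

lemma spn_right:
  assumes b': "b' \<in> wb_carrier (Suc r) (Suc s)" and x: "x \<in> spn (gens I k)"
  shows "mA x b' \<in> spn (gens I k)"
  using x
proof (induction x rule: spn.induct)
  case zero then show ?case by (simp add: wb_mult_zero_left spn.zero)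
next
  case (gen g)
  then obtain a b y where g: "g = mA a (mA (psi y) b)" "a \<in> wb_carrier (Suc r) (Suc s)"
    "b \<in> wb_carrier (Suc r) (Suc s)" "y \<in> Pk I k" unfolding gens_def by blast
  have "mA g b' = mA a (mA (psi y) (mA b b'))" using g by (simp add: wb_mult_assoc)
  moreover have "mA b b' \<in> wb_carrier (Suc r) (Suc s)" by (rule wb_mult_carrier)
  ultimately have "mA g b' \<in> gens I k" using g unfolding gens_def by blast
  then show ?case by (rule spn.gen)
next
  case (add x y) then show ?case by (simp add: wb_mult_add_left spn.add)
next
  case (smul x c) then show ?case by (simp add: wb_mult_smult_left spn.smul)
qed

context
  fixes I assumes idI: "wb_ideal r s \<delta> I"
begin

lemma I_carrier: "I \<subseteq> wb_carrier r s"
  using idI by (simp add: wb_ideal_def)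

lemma I_left: "a \<in> wb_carrier r s \<Longrightarrow> x \<in> I \<Longrightarrow> mB a x \<in> I"
  using idI by (simp add: wb_ideal_def)

lemma prod_carrier: "zs \<noteq> [] \<Longrightarrow> set zs \<subseteq> I \<Longrightarrow> wb_prod r s \<delta> zs \<in> wb_carrier r s"
proof (induction zs)
  case Nil then show ?case by simp
next
  case (Cons x xs)
  show ?case
  proof (cases "xs = []")
    case True then show ?thesis using Cons.prems I_carrier by auto
  next
    case False then show ?thesis by (simp add: wb_prod_Cons wb_mult_carrier)
  qed
qed

lemma Pk_carrier: "k \<ge> 1 \<Longrightarrow> y \<in> Pk I k \<Longrightarrow> y \<in> wb_carrier r s"
proof -
  assume k: "k \<ge> 1" and y: "y \<in> Pk I k"
  obtain zs where zs: "y = wb_prod r s \<delta> zs" "length zs = k" "set zs \<subseteq> I" using y unfolding Pk_def by blast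
  have "zs \<noteq> []" using zs(2) k by auto
  then show ?thesis using prod_carrier zs by simp
qed

lemma Pk_step:
  assumes k: "k \<ge> 1" and y: "y \<in> Pk I 1" and z: "z \<in> Pk I k" and phi: "\<phi> \<in> wb_carrier r s"
  shows "mB y (mB \<phi> z) \<in> Pk I (Suc k)"
proof -
  obtain y0 where y0: "y = y0" "y0 \<in> I" using y unfolding Pk_def
    by (auto simp: length_Suc_conv)
  obtain zs where zs: "z = wb_prod r s \<delta> zs" "length zs = k" "set zs \<subseteq> I" using z unfolding Pk_def by blast
  obtain z1 zs' where zs1: "zs = z1 # zs'" using k zs(2) by (cases zs) auto
  have u: "mB \<phi> z1 \<in> I" using I_left[OF phi] zs zs1 by auto
  show ?thesis
  proof (cases "zs' = []")
    case True
    then have "mB y (mB \<phi> z) = wb_prod r s \<delta> [y0, mB \<phi> z1]" using zs zs1 y0 by simp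
    moreover have "length [y0, mB \<phi> z1] = Suc k" using True zs zs1 by simp
    moreover have "set [y0, mB \<phi> z1] \<subseteq> I" using u y0 by simp
    ultimately show ?thesis by (rule Pk_I)
  next
    case False
    have "mB \<phi> z = mB (mB \<phi> z1) (wb_prod r s \<delta> zs')"
      using zs zs1 False by (simp add: wb_prod_Cons wb_mult_assoc)
    then have "mB y (mB \<phi> z) = wb_prod r s \<delta> (y0 # mB \<phi> z1 # zs')"
      using False y0 by (simp add: wb_prod_Cons)
    moreover have "length (y0 # mB \<phi> z1 # zs') = Suc k" using zs zs1 by simp
    moreover have "set (y0 # mB \<phi> z1 # zs') \<subseteq> I" using y0 u zs zs1 by auto
    ultimately show ?thesis by (rule Pk_I)
  qed
qed

lemma key:
  assumes k: "k \<ge> 1" and y: "y \<in> Pk I 1" and z: "z \<in> Pk I k"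
    and a: "a \<in> wb_carrier (Suc r) (Suc s)" and b: "b \<in> wb_carrier (Suc r) (Suc s)"
    and a': "a' \<in> wb_carrier (Suc r) (Suc s)" and b': "b' \<in> wb_carrier (Suc r) (Suc s)"
  shows "mA (mA a (mA (psi y) b)) (mA a' (mA (psi z) b')) \<in> gens I (Suc k)"
proof -
  define c where "c = mA b a'"
  have yc: "y \<in> wb_carrier r s" by (rule Pk_carrier[of 1]) (use y in auto)
  have zc: "z \<in> wb_carrier r s" using Pk_carrier z k by simp
  obtain \<phi> where phi: "\<phi> \<in> wb_carrier r s" "mA eA (mA c eA) = psi \<phi>" using sandwich_alg[where a = c] by blast
  have A: "mA (mA a (mA (psi y) b)) (mA a' (mA (psi z) b')) = mA a (mA (mA (psi y) (mA c (psi z))) b')"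
    unfolding c_def by (simp add: wb_mult_assoc)
  have "mA (psi y) (mA c (psi z)) = mA (mA (psi y) eA) (mA c (mA eA (psi z)))"
    using psi_eA_right[OF yc] psi_eA_left[OF zc] by simp
  also have "\<dots> = mA (psi y) (mA (mA eA (mA c eA)) (psi z))"
    by (simp add: wb_mult_assoc)
  also have "\<dots> = psi (mB y (mB \<phi> z))" using phi(2) by (simp add: psi_mult)
  finally have B: "mA (psi y) (mA c (psi z)) = psi (mB y (mB \<phi> z))" .
  have "mB y (mB \<phi> z) \<in> Pk I (Suc k)" by (rule Pk_step[OF k y z phi(1)])
  then show ?thesis unfolding A B gens_def using a b' by blast
qed

lemma spn_prod:
  assumes k: "k \<ge> 1" and x: "x \<in> spn (gens I 1)" and w: "w \<in> spn (gens I k)"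
  shows "mA x w \<in> spn (gens I (Suc k))"
  using x
proof (induction x rule: spn.induct)
  case zero then show ?case by (simp add: wb_mult_zero_left spn.zero)
next
  case (gen g)
  then obtain a b y where g: "g = mA a (mA (psi y) b)" "a \<in> wb_carrier (Suc r) (Suc s)"
    "b \<in> wb_carrier (Suc r) (Suc s)" "y \<in> Pk I 1" unfolding gens_def by blast
  show ?case using w
  proof (induction w rule: spn.induct)
    case zero then show ?case by (simp add: wb_mult_zero_right spn.zero)
  next
    case (gen g2)
    then obtain a' b' z where g2: "g2 = mA a' (mA (psi z) b')" "a' \<in> wb_carrier (Suc r) (Suc s)"
      "b' \<in> wb_carrier (Suc r) (Suc s)" "z \<in> Pk I k" unfolding gens_def by blast
    show ?case using key[OF k g(4) g2(4) g(2) g(3) g2(2) g2(3)] g g2 by (simp add: spn.gen)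
  next
    case (add x y) then show ?case by (simp add: wb_mult_add_right spn.add)
  next
    case (smul x c) then show ?case by (simp add: wb_mult_smult_right spn.smul)
  qed
next
  case (add x y) then show ?case by (simp add: wb_mult_add_left spn.add)
next
  case (smul x c) then show ?case by (simp add: wb_mult_smult_left spn.smul)
qed

lemma prod_J:
  "xs \<noteq> [] \<Longrightarrow> set xs \<subseteq> spn (gens I 1) \<Longrightarrow> wb_prod (Suc r) (Suc s) \<delta> xs \<in> spn (gens I (length xs))"
proof (induction xs)
  case Nil then show ?case by simp
next
  case (Cons x xs)
  show ?case
  proof (cases "xs = []")
    case True then show ?thesis using Cons by simp
  next
    case False
    have "wb_prod (Suc r) (Suc s) \<delta> xs \<in> spn (gens I (length xs))" using Cons False by simp
    moreover have "length xs \<ge> 1" using False by (cases xs) auto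
    ultimately have "mA x (wb_prod (Suc r) (Suc s) \<delta> xs) \<in> spn (gens I (Suc (length xs)))"
      using spn_prod Cons.prems by simp
    then show ?thesis using False by (simp add: wb_prod_Cons)
  qed
qed

lemma psi_zero: "psi (\<lambda>_. 0) = (\<lambda>_. (0::'k))"
  unfolding psi_def by (simp cong: if_cong)

lemma gens_nil:
  assumes nil: "\<forall>xs. length xs = m \<longrightarrow> set xs \<subseteq> I \<longrightarrow> wb_prod r s \<delta> xs = (\<lambda>_. 0)"
  shows "gens I m \<subseteq> {\<lambda>_. 0}"
proof
  fix g assume "g \<in> gens I m"
  then obtain a b y where g: "g = mA a (mA (psi y) b)" "y \<in> Pk I m" unfolding gens_def by blast
  have "y = (\<lambda>_. 0)" using g(2) nil unfolding Pk_def by blast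
  then show "g \<in> {\<lambda>_. 0}" using g(1) by (simp add: psi_zero wb_mult_zero_left wb_mult_zero_right)
qed

lemma J_ideal: "wb_ideal (Suc r) (Suc s) \<delta> (spn (gens I 1))"
  unfolding wb_ideal_def
proof (intro conjI ballI allI)
  show "spn (gens I 1) \<subseteq> wb_carrier (Suc r) (Suc s)" using spn_sub gens_carrier by blast
  show "(\<lambda>_. 0) \<in> spn (gens I 1)" by (rule spn.zero)
next
  fix x y assume "x \<in> spn (gens I 1)" "y \<in> spn (gens I 1)"
  then show "(\<lambda>d. x d + y d) \<in> spn (gens I 1)" by (rule spn.add)
next
  fix c :: 'k and x assume "x \<in> spn (gens I 1)"
  then show "(\<lambda>d. c * x d) \<in> spn (gens I 1)" by (rule spn.smul)
next
  fix a x :: "diagram \<Rightarrow> 'k" assume "a \<in> wb_carrier (Suc r) (Suc s)" "x \<in> spn (gens I 1)"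
  then show "mA a x \<in> spn (gens I 1)" "mA x a \<in> spn (gens I 1)"
    using spn_left spn_right by auto
qed

lemma psi_in_J: "y \<in> I \<Longrightarrow> psi y \<in> spn (gens I 1)"
proof -
  assume y: "y \<in> I"
  have yc: "y \<in> wb_carrier r s" using y I_carrier by auto
  have "y \<in> Pk I 1" by (rule Pk_I[of _ "[y]"]) (use y in auto)
  then have "mA eA (mA (psi y) eA) \<in> gens I 1" unfolding gens_def using eA_carrier by blast
  then have "mA eA (mA (psi y) eA) \<in> spn (gens I 1)" by (rule spn.gen)
  then show ?thesis using psi_eA_right[OF yc] psi_eA_left[OF yc] by simp
qed

end

theorem main_emb: "\<not> wb_semisimple r s \<delta> \<Longrightarrow> \<not> wb_semisimple (Suc r) (Suc s) \<delta>"
proof -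
  assume "\<not> wb_semisimple r s \<delta>"
  then obtain I where nI: "wb_nilpotent_ideal r s \<delta> I" and ne: "I \<noteq> {\<lambda>_. 0}"
    unfolding wb_semisimple_def by blast
  have idI: "wb_ideal r s \<delta> I" using nI by (simp add: wb_nilpotent_ideal_def)
  obtain m where m: "m > 0" "\<forall>xs. length xs = m \<longrightarrow> set xs \<subseteq> I \<longrightarrow> wb_prod r s \<delta> xs = (\<lambda>_. 0)"
    using nI by (auto simp: wb_nilpotent_ideal_def)
  have z: "(\<lambda>_. 0) \<in> I" using idI by (simp add: wb_ideal_def)
  obtain y where y: "y \<in> I" "y \<noteq> (\<lambda>_. 0)" using ne z by blast
  have yc: "y \<in> wb_carrier r s" using y I_carrier[OF idI] by auto
  obtain d where d: "y d \<noteq> 0" using y(2) by auto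
  have dW: "d \<in> WB r s" using yc d unfolding wb_carrier_def by blast
  define J where "J = spn (gens I 1)"
  have "wb_nilpotent_ideal (Suc r) (Suc s) \<delta> J"
    unfolding wb_nilpotent_ideal_def
  proof (intro conjI exI[of _ m] allI impI)
    show "wb_ideal (Suc r) (Suc s) \<delta> J" unfolding J_def by (rule J_ideal[OF idI])
    show "m > 0" by (rule m(1))
  next
    fix xs :: "(diagram \<Rightarrow> 'k) list" assume xs: "length xs = m" "set xs \<subseteq> J"
    have "xs \<noteq> []" using xs m by auto
    then have "wb_prod (Suc r) (Suc s) \<delta> xs \<in> spn (gens I (length xs))"
      using prod_J[OF idI] xs unfolding J_def by blast
    then have "wb_prod (Suc r) (Suc s) \<delta> xs \<in> spn (gens I m)" using xs(1) by simp
    then show "wb_prod (Suc r) (Suc s) \<delta> xs = (\<lambda>_. 0)"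
      using spn_zero gens_nil[OF idI m(2)] by blast
  qed
  moreover have "J \<noteq> {\<lambda>_. 0}"
  proof
    assume "J = {\<lambda>_. 0}"
    moreover have "psi y \<in> J" unfolding J_def by (rule psi_in_J[OF idI y(1)])
    ultimately have "psi y (kap d) = 0" by auto
    moreover have "psi y (kap d) = y d" by (rule psi_at[OF dW])
    ultimately show False using d by simp
  qed
  ultimately show ?thesis unfolding wb_semisimple_def by blast
qed

end

end


lemma emb_cfg1:
  assumes r: "0 < r"
  shows "emb r s (\<lambda>k. if k < r - 1 then k else if k = r - 1 then r else k + 2)
    (\<lambda>k. if k < r then k else k + 2)
    (\<lambda>j. if j < r - 1 then j else if j = r then r - 1 else j - 2)
    (\<lambda>j. if j < r then j else j - 2) (r + 1) (r - 1)"
  using r by unfold_locales auto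

lemma emb_cfg2:
  assumes s: "0 < s"
  shows "emb r s (\<lambda>k. if k < r then k else if k = r then r + 1 else k + 2)
    (\<lambda>k. if k < r then k else k + 2)
    (\<lambda>j. if j < r then j else if j = r + 1 then r else j - 2)
    (\<lambda>j. if j < r then j else j - 2) r r"
  using s by unfold_locales auto

theorem corollary6p4:
  fixes \<delta> :: "'k::field" and p r s :: nat
  assumes "CHAR('k) = p" and "p > 0"
    and "\<delta> \<in> range (of_nat :: nat \<Rightarrow> 'k)"
    and "r \<noteq> 0 \<or> s \<noteq> 0"
    and "\<not> wb_semisimple r s \<delta>"
  shows "\<not> wb_semisimple (Suc r) (Suc s) \<delta>"
proof (cases "r = 0")
  case False
  then show ?thesis using emb.main_emb[OF emb_cfg1] assms(5) by blast
next
  case True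
  then have "s \<noteq> 0" using assms(4) by simp
  then show ?thesis using emb.main_emb[OF emb_cfg2] assms(5) by blast
qed


end
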